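(* Assume the setup of the context with $F$ formally real, and fix a $\ast$-symmetric basis $B$ of $H$. Let $\rho:H\to K^{d\times d}$ be an irreducible matrix representation of isomorphism type $\lambda\in\Lambda$. (a) Suppose there is $\Omega\in\mathcal{O}^{d\times d}$ with $\Omega\rho(x)=\rho(x^\ast)^T\Omega$ for all $x\in B$ such that $\Omega+\mathfrak{m}^{d\times d}$ is an invertible diagonal matrix $\mathrm{diag}(d_1,\dots,d_d)\in GL_d(F)$. Then $a_\lambda\in\Gamma$ and $\rho$ is balanced; moreover, for any $v^{a_\lambda}\in K$ with $\nu(v^{a_\lambda})=a_\lambda$, the matrices $c(x):=v^{a_\lambda}\rho(x)\bmod\mathfrak{m}\in F^{d\times d}$ satisfy $d_{\mathfrak t}\,c(x^\ast)_{\mathfrak{ts}}=d_{\mathfrak s}\,c(x)_{\mathfrak{st}}$ for all $x\in B$ and all $\mathfrak s,\mathfrak t$. (b) Suppose there is a symmetric $\Omega\in GL_d(\mathcal{O})$ with $\Omega\rho(x)=\rho(x^\ast)^T\Omega$ for all $x\in B$. Then $a_\lambda\in\Gamma$ and $\rho$ is balanced.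
   Context: Setup: $\Gamma$ a totally ordered abelian group; $K$ a field with surjective valuation $\nu:K\to\Gamma\cup\{\infty\}$, valuation ring $\mathcal{O}$, maximal ideal $\mathfrak{m}$, residue field $F=\mathcal{O}/\mathfrak{m}$; $\nu$ of a matrix is the minimum of the valuations of its entries. $F$ formally real means $-1$ is not a sum of squares in $F$. $H$ is a finite-dimensional split semisimple $K$-algebra which is symmetric with respect to a $K$-linear trace form $\tau:H\to K$ ($\tau(ab)=\tau(ba)$, $(a,b)\mapsto\tau(ab)$ nondegenerate). $\Lambda$ indexes the simple $H$-modules, $\chi_\lambda$ is the character of type $\lambda$, and the Schur elements $c_\lambda\in K^\times$ are defined by $\tau=\sum_{\lambda\in\Lambda}c_\lambda^{-1}\chi_\lambda$. $\ast:H\to H$ is a $K$-linear antiautomorphism with $h^{\ast\ast}=h$. A $\ast$-symmetric basis is a $K$-basis $B$ of $H$ with $B^\ast=B$ and $\tau(bc^\ast)=\delta_{bc}$ for all $b,c\in B$; one is assumed to exist. Put $a_\lambda:=-\tfrac12\nu(c_\lambda)\in\tfrac12\Gamma$. An irreducible matrix representation $\rho:H\to K^{d\times d}$ of type $\lambda$ is called balanced if $a_\lambda\in\Gamma$ and $\nu(\rho(b))\ge-a_\lambda$ for all $b\in B'$, for every $\ast$-symmetric basis $B'$ of $H$. *)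

theory Defs
  imports Main "Jordan_Normal_Form.Matrix"
begin

text \<open>The valuation is modelled as nu :: 'k => 'g; the value nu 0 is irrelevant
  and plays the role of infinity (every statement about values is guarded by x \<noteq> 0).\<close>

definition valuation :: "('k::field \<Rightarrow> 'g::linordered_ab_group_add) \<Rightarrow> bool" where
  "valuation nu \<longleftrightarrow>
     (\<forall>x y. x \<noteq> 0 \<and> y \<noteq> 0 \<longrightarrow> nu (x * y) = nu x + nu y) \<and>
     (\<forall>x y. x \<noteq> 0 \<and> y \<noteq> 0 \<and> x + y \<noteq> 0 \<longrightarrow> min (nu x) (nu y) \<le> nu (x + y))"

definition surj_valuation :: "('k::field \<Rightarrow> 'g::linordered_ab_group_add) \<Rightarrow> bool" where
  "surj_valuation nu \<longleftrightarrow> valuation nu \<and> (\<forall>g. \<exists>x. x \<noteq> 0 \<and> nu x = g)"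

definition val_ring :: "('k::field \<Rightarrow> 'g::linordered_ab_group_add) \<Rightarrow> 'k set" where
  "val_ring nu = {x. x = 0 \<or> 0 \<le> nu x}"

definition val_ideal :: "('k::field \<Rightarrow> 'g::linordered_ab_group_add) \<Rightarrow> 'k set" where
  "val_ideal nu = {x. x = 0 \<or> 0 < nu x}"

text \<open>Residue field F = O/m formally real: -1 is not a sum of squares in F, i.e. for
  no x_1..x_n in O is 1 + sum x_i^2 in m.\<close>
definition residue_formally_real :: "('k::field \<Rightarrow> 'g::linordered_ab_group_add) \<Rightarrow> bool" where
  "residue_formally_real nu \<longleftrightarrow>
     (\<forall>xs. set xs \<subseteq> val_ring nu \<longrightarrow> 1 + sum_list (map (\<lambda>x. x * x) xs) \<notin> val_ideal nu)"

definition mat_val_ge :: "('k::field \<Rightarrow> 'g::linordered_ab_group_add) \<Rightarrow> 'k mat \<Rightarrow> 'g \<Rightarrow> bool" where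
  "mat_val_ge nu A g \<longleftrightarrow>
     (\<forall>i < dim_row A. \<forall>j < dim_col A. A $$ (i,j) = 0 \<or> g \<le> nu (A $$ (i,j)))"

definition mat_over :: "'k set \<Rightarrow> 'k mat \<Rightarrow> bool" where
  "mat_over R A \<longleftrightarrow> (\<forall>i < dim_row A. \<forall>j < dim_col A. A $$ (i,j) \<in> R)"

definition K_algebra :: "('k::field \<Rightarrow> 'h::ring_1 \<Rightarrow> 'h) \<Rightarrow> bool" where
  "K_algebra smul \<longleftrightarrow> vector_space smul \<and>
     (\<forall>c a b. smul c (a * b) = smul c a * b \<and> smul c (a * b) = a * smul c b)"

definition is_K_basis :: "('k::field \<Rightarrow> 'h::ring_1 \<Rightarrow> 'h) \<Rightarrow> 'h set \<Rightarrow> bool" where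
  "is_K_basis smul B \<longleftrightarrow> \<not> module.dependent smul B \<and> module.span smul B = UNIV"

definition matrix_rep :: "('k::field \<Rightarrow> 'h::ring_1 \<Rightarrow> 'h) \<Rightarrow> ('h \<Rightarrow> 'k mat) \<Rightarrow> nat \<Rightarrow> bool" where
  "matrix_rep smul rho d \<longleftrightarrow>
     (\<forall>h. rho h \<in> carrier_mat d d) \<and> rho 1 = 1\<^sub>m d \<and>
     (\<forall>a b. rho (a * b) = rho a * rho b) \<and>
     (\<forall>a b. rho (a + b) = rho a + rho b) \<and>
     (\<forall>c a. rho (smul c a) = c \<cdot>\<^sub>m rho a)"

definition irreducible_rep :: "('k::field \<Rightarrow> 'h::ring_1 \<Rightarrow> 'h) \<Rightarrow> ('h \<Rightarrow> 'k mat) \<Rightarrow> nat \<Rightarrow> bool" where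
  "irreducible_rep smul rho d \<longleftrightarrow> matrix_rep smul rho d \<and> 0 < d \<and>
     (\<forall>W. W \<subseteq> carrier_vec d \<and> 0\<^sub>v d \<in> W \<and>
          (\<forall>v\<in>W. \<forall>w\<in>W. v + w \<in> W) \<and> (\<forall>c. \<forall>v\<in>W. c \<cdot>\<^sub>v v \<in> W) \<and>
          (\<forall>h. \<forall>v\<in>W. rho h *\<^sub>v v \<in> W)
        \<longrightarrow> W = {0\<^sub>v d} \<or> W = carrier_vec d)"

text \<open>Split semisimple (Wedderburn form): there are irreducible matrix representations
  rho_1,...,rho_r such that h |-> (rho_1 h, ..., rho_r h) is an isomorphism of H onto the
  product of the full matrix algebras K^{d_i x d_i}.\<close>
definition split_semisimple :: "('k::field \<Rightarrow> 'h::ring_1 \<Rightarrow> 'h) \<Rightarrow> bool" where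
  "split_semisimple smul \<longleftrightarrow> K_algebra smul \<and>
     (\<exists>rs :: (('h \<Rightarrow> 'k mat) \<times> nat) list.
        (\<forall>(r, n) \<in> set rs. irreducible_rep smul r n) \<and>
        bij_betw (\<lambda>h. map (\<lambda>(r, n). r h) rs) UNIV
          {Ms. length Ms = length rs \<and>
               (\<forall>i < length rs. Ms ! i \<in> carrier_mat (snd (rs ! i)) (snd (rs ! i)))})"

definition symmetrizing_trace :: "('k::field \<Rightarrow> 'h::ring_1 \<Rightarrow> 'h) \<Rightarrow> ('h \<Rightarrow> 'k) \<Rightarrow> bool" where
  "symmetrizing_trace smul tau \<longleftrightarrow>
     (\<forall>a b. tau (a + b) = tau a + tau b) \<and> (\<forall>c a. tau (smul c a) = c * tau a) \<and>
     (\<forall>a b. tau (a * b) = tau (b * a)) \<and>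
     (\<forall>a. (\<forall>b. tau (a * b) = 0) \<longrightarrow> a = 0)"

definition involutive_antiaut :: "('k::field \<Rightarrow> 'h::ring_1 \<Rightarrow> 'h) \<Rightarrow> ('h \<Rightarrow> 'h) \<Rightarrow> bool" where
  "involutive_antiaut smul star \<longleftrightarrow>
     (\<forall>a b. star (a + b) = star a + star b) \<and> (\<forall>c a. star (smul c a) = smul c (star a)) \<and>
     (\<forall>a b. star (a * b) = star b * star a) \<and> (\<forall>a. star (star a) = a)"

definition star_symmetric_basis ::
  "('k::field \<Rightarrow> 'h::ring_1 \<Rightarrow> 'h) \<Rightarrow> ('h \<Rightarrow> 'k) \<Rightarrow> ('h \<Rightarrow> 'h) \<Rightarrow> 'h set \<Rightarrow> bool" where
  "star_symmetric_basis smul tau star B \<longleftrightarrow> is_K_basis smul B \<and> star ` B = B \<and>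
     (\<forall>b\<in>B. \<forall>c\<in>B. tau (b * star c) = (if b = c then 1 else 0))"

text \<open>Characters; the isomorphism types Lambda of simple H-modules are indexed by their
  characters chi_lambda (distinct simple modules of a split semisimple algebra have
  distinct characters).\<close>
definition character :: "('h \<Rightarrow> 'k::field mat) \<Rightarrow> 'h \<Rightarrow> 'k" where
  "character rho = (\<lambda>h. \<Sum>i < dim_row (rho h). rho h $$ (i,i))"

definition irr_chars :: "('k::field \<Rightarrow> 'h::ring_1 \<Rightarrow> 'h) \<Rightarrow> ('h \<Rightarrow> 'k) set" where
  "irr_chars smul = {character rho | rho d. irreducible_rep smul rho d}"

definition schur_elements ::
  "('k::field \<Rightarrow> 'h::ring_1 \<Rightarrow> 'h) \<Rightarrow> ('h \<Rightarrow> 'k) \<Rightarrow> (('h \<Rightarrow> 'k) \<Rightarrow> 'k) \<Rightarrow> bool" where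
  "schur_elements smul tau c \<longleftrightarrow> finite (irr_chars smul) \<and>
     (\<forall>chi \<in> irr_chars smul. c chi \<noteq> 0) \<and>
     (\<forall>h. tau h = (\<Sum>chi \<in> irr_chars smul. inverse (c chi) * chi h))"

text \<open>Balanced: a_lambda = -nu(c_lambda)/2 lies in Gamma, and nu(rho b) \<ge> -a_lambda
  for every b in every *-symmetric basis.  Here cl = c_lambda.\<close>
definition balanced ::
  "('k::field \<Rightarrow> 'g::linordered_ab_group_add) \<Rightarrow> ('k \<Rightarrow> 'h::ring_1 \<Rightarrow> 'h) \<Rightarrow> ('h \<Rightarrow> 'k) \<Rightarrow>
   ('h \<Rightarrow> 'h) \<Rightarrow> 'k \<Rightarrow> ('h \<Rightarrow> 'k mat) \<Rightarrow> bool" where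
  "balanced nu smul tau star cl rho \<longleftrightarrow>
     (\<exists>a. nu cl = - (a + a) \<and>
        (\<forall>B'. star_symmetric_basis smul tau star B' \<longrightarrow>
           (\<forall>b\<in>B'. mat_val_ge nu (rho b) (- a))))"

end

theory Submission
  imports Defs
begin

context
  fixes nu :: "'k::field \<Rightarrow> 'g::linordered_ab_group_add"
  assumes val: "valuation nu"
begin

lemma nu_mult: "x \<noteq> 0 \<Longrightarrow> y \<noteq> 0 \<Longrightarrow> nu (x * y) = nu x + nu y"
  using val unfolding valuation_def by blast

lemma nu_add: "x \<noteq> 0 \<Longrightarrow> y \<noteq> 0 \<Longrightarrow> x + y \<noteq> 0 \<Longrightarrow> min (nu x) (nu y) \<le> nu (x + y)"
  using val unfolding valuation_def by blast

lemma double_eq_zero: assumes h: "(a::'g) + a = 0" shows "a = 0"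
proof (cases "a < 0")
  case True then have "a + a < 0" using add_neg_neg by blast
  then show ?thesis using h by simp
next
  case False
  show ?thesis proof (rule ccontr)
    assume "a \<noteq> 0" with False have "a > 0" by simp
    then have "a + a > 0" using add_pos_pos by blast
    with h show False by simp
  qed
qed

lemma double_cancel: "(a::'g) + a = b + b \<Longrightarrow> a = b"
proof -
  assume h: "a + a = b + b"
  have "(a - b) + (a - b) = 0" using h by (simp add: algebra_simps)
  then have "a - b = 0" by (rule double_eq_zero)
  then show ?thesis by simp
qed

lemma nu_one: "nu 1 = 0"
proof -
  have "nu (1*1) = nu 1 + nu 1" by (rule nu_mult) auto
  then show ?thesis by simp
qed

lemma nu_minus_one: "nu (-1) = 0"
proof -
  have "nu ((-1)*(-1)) = nu (-1) + nu (-1)" by (rule nu_mult) auto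
  then have "nu (-1) + nu (-1) = 0" using nu_one by simp
  then show ?thesis by (rule double_eq_zero)
qed

lemma nu_uminus: "x \<noteq> 0 \<Longrightarrow> nu (- x) = nu x"
proof -
  assume x: "x \<noteq> 0"
  have "nu ((-1) * x) = nu (-1) + nu x" by (rule nu_mult) (use x in auto)
  then show ?thesis using nu_minus_one by simp
qed

lemma nu_inverse: "x \<noteq> 0 \<Longrightarrow> nu (inverse x) = - nu x"
proof -
  assume x: "x \<noteq> 0"
  have "nu (x * inverse x) = nu x + nu (inverse x)" by (rule nu_mult) (use x in auto)
  then have "nu x + nu (inverse x) = 0" using x nu_one by simp
  moreover have "nu (inverse x) = - nu x + (nu x + nu (inverse x))" by (simp add: algebra_simps)
  ultimately show ?thesis by simp
qed

lemma O_add: assumes "x \<in> val_ring nu" "y \<in> val_ring nu" shows "x + y \<in> val_ring nu"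
proof (cases "x = 0 \<or> y = 0 \<or> x + y = 0")
  case True then show ?thesis using assms by (auto simp: val_ring_def)
next
  case False
  then have "min (nu x) (nu y) \<le> nu (x + y)" using nu_add by blast
  moreover have "0 \<le> min (nu x) (nu y)" using assms False by (simp add: val_ring_def)
  ultimately have "0 \<le> nu (x + y)" by (rule order_trans[rotated])
  then show ?thesis unfolding val_ring_def by simp
qed

lemma O_mult: assumes "x \<in> val_ring nu" "y \<in> val_ring nu" shows "x * y \<in> val_ring nu"
proof (cases "x = 0 \<or> y = 0")
  case True then show ?thesis by (auto simp: val_ring_def)
next
  case False
  then have "nu (x*y) = nu x + nu y" using nu_mult by blast
  moreover have "0 \<le> nu x" "0 \<le> nu y" using assms False by (auto simp: val_ring_def)
  ultimately show ?thesis unfolding val_ring_def by simp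
qed

lemma O_uminus: assumes "x \<in> val_ring nu" shows "- x \<in> val_ring nu"
proof (cases "x = 0")
  case True then show ?thesis by (auto simp: val_ring_def)
next
  case False then show ?thesis using assms nu_uminus[OF False] by (simp add: val_ring_def)
qed

lemma O_diff: "x \<in> val_ring nu \<Longrightarrow> y \<in> val_ring nu \<Longrightarrow> x - y \<in> val_ring nu"
  using O_add O_uminus by (metis diff_conv_add_uminus)

lemma O_zero: "0 \<in> val_ring nu" unfolding val_ring_def by simp
lemma O_one: "1 \<in> val_ring nu" unfolding val_ring_def using nu_one by simp

lemma m_zero: "0 \<in> val_ideal nu" unfolding val_ideal_def by simp

lemma m_O: "x \<in> val_ideal nu \<Longrightarrow> x \<in> val_ring nu"
  unfolding val_ideal_def val_ring_def by auto

lemma m_add: assumes "x \<in> val_ideal nu" "y \<in> val_ideal nu" shows "x + y \<in> val_ideal nu"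
proof (cases "x = 0 \<or> y = 0 \<or> x + y = 0")
  case True then show ?thesis using assms by (auto simp: val_ideal_def)
next
  case False
  then have "min (nu x) (nu y) \<le> nu (x + y)" using nu_add by blast
  moreover have "0 < min (nu x) (nu y)" using assms False by (simp add: val_ideal_def)
  ultimately have "0 < nu (x + y)" by (rule order.strict_trans2[rotated])
  then show ?thesis unfolding val_ideal_def by simp
qed

lemma m_uminus: assumes "x \<in> val_ideal nu" shows "- x \<in> val_ideal nu"
proof (cases "x = 0")
  case True then show ?thesis by (auto simp: val_ideal_def)
next
  case False then show ?thesis using assms nu_uminus[OF False] by (simp add: val_ideal_def)
qed

lemma m_diff: "x \<in> val_ideal nu \<Longrightarrow> y \<in> val_ideal nu \<Longrightarrow> x - y \<in> val_ideal nu"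
  using m_add m_uminus by (metis diff_conv_add_uminus)

lemma m_mult_O: assumes "x \<in> val_ideal nu" "y \<in> val_ring nu" shows "x * y \<in> val_ideal nu"
proof (cases "x = 0 \<or> y = 0")
  case True then show ?thesis by (auto simp: val_ideal_def)
next
  case False
  then have "nu (x*y) = nu x + nu y" using nu_mult by blast
  moreover have "0 < nu x" "0 \<le> nu y" using assms False by (auto simp: val_ring_def val_ideal_def)
  ultimately show ?thesis unfolding val_ideal_def by (simp add: add_pos_nonneg)
qed

lemma O_mult_m: "y \<in> val_ring nu \<Longrightarrow> x \<in> val_ideal nu \<Longrightarrow> y * x \<in> val_ideal nu"
  using m_mult_O by (simp add: mult.commute)

lemma unit_nu: "x \<in> val_ring nu \<Longrightarrow> x \<notin> val_ideal nu \<Longrightarrow> x \<noteq> 0 \<and> nu x = 0"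
  unfolding val_ring_def val_ideal_def by auto

lemma m_sum: "finite S \<Longrightarrow> (\<And>x. x \<in> S \<Longrightarrow> f x \<in> val_ideal nu) \<Longrightarrow> sum f S \<in> val_ideal nu"
  by (induction S rule: finite_induct) (auto intro: m_add m_zero)

lemma O_sum: "finite S \<Longrightarrow> (\<And>x. x \<in> S \<Longrightarrow> f x \<in> val_ring nu) \<Longrightarrow> sum f S \<in> val_ring nu"
  by (induction S rule: finite_induct) (auto intro: O_add O_zero)

lemma sos:
  assumes fr: "residue_formally_real nu" and fin: "finite S"
    and fO: "\<And>x. x \<in> S \<Longrightarrow> f x \<in> val_ring nu" and x0: "x0 \<in> S" "f x0 \<notin> val_ideal nu"
  shows "(\<Sum>x\<in>S. f x * f x) \<notin> val_ideal nu"
proof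
  assume mem: "(\<Sum>x\<in>S. f x * f x) \<in> val_ideal nu"
  define u where "u = f x0"
  have u: "u \<noteq> 0" "nu u = 0" using unit_nu[OF fO[OF x0(1)] x0(2)] u_def by auto
  define g where "g x = f x / u" for x
  have gO: "g x \<in> val_ring nu" if "x \<in> S" for x
  proof (cases "f x = 0")
    case True then show ?thesis by (simp add: g_def O_zero)
  next
    case False
    have "nu (g x) = nu (f x) + nu (inverse u)" unfolding g_def divide_inverse
      by (rule nu_mult) (use False u in auto)
    also have "\<dots> = nu (f x)" using nu_inverse[OF u(1)] u by simp
    finally show ?thesis using fO[OF that] False unfolding val_ring_def by auto
  qed
  obtain xs where xs: "set xs = S - {x0}" "distinct xs"
    using finite_distinct_list[of "S - {x0}"] fin by auto
  define w where "w = 1 + sum_list (map (\<lambda>x. x * x) (map g xs))"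
  have "set (map g xs) \<subseteq> val_ring nu" using xs gO by auto
  then have wnot: "w \<notin> val_ideal nu" using fr unfolding residue_formally_real_def w_def
    by blast
  have wsum: "w = 1 + (\<Sum>x\<in>S-{x0}. g x * g x)"
    unfolding w_def using xs by (simp add: sum_list_distinct_conv_sum_set)
  have "(\<Sum>x\<in>S. f x * f x) = f x0 * f x0 + (\<Sum>x\<in>S-{x0}. f x * f x)"
    by (rule sum.remove[OF fin x0(1)])
  also have "(\<Sum>x\<in>S-{x0}. f x * f x) = (\<Sum>x\<in>S-{x0}. (u*u) * (g x * g x))"
    using u by (intro sum.cong) (auto simp: g_def field_simps)
  also have "f x0 * f x0 + \<dots> = (u * u) * w"
    unfolding wsum u_def distrib_left sum_distrib_left[symmetric] by simp
  finally have eq: "(\<Sum>x\<in>S. f x * f x) = (u * u) * w" .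
  have wO: "w \<in> val_ring nu" unfolding wsum
  proof (rule O_add[OF O_one], rule O_sum)
    show "finite (S - {x0})" using fin by simp
    show "g x * g x \<in> val_ring nu" if "x \<in> S - {x0}" for x using gO that by (simp add: O_mult)
  qed
  have w0: "w \<noteq> 0" "nu w = 0" using unit_nu[OF wO wnot] by auto
  have "nu ((u*u)*w) = nu u + nu u + nu w" using u w0 by (simp add: nu_mult)
  then have "nu ((u*u)*w) = 0" using u w0 by simp
  moreover have "(u*u)*w \<noteq> 0" using u w0 by simp
  moreover have "(u*u)*w \<in> val_ideal nu" using mem eq by simp
  ultimately show False unfolding val_ideal_def by simp
qed

end

lemma mult_entry:
  assumes "A \<in> carrier_mat n m" "B \<in> carrier_mat m k" "i < n" "j < k"
  shows "(A * B) $$ (i,j) = (\<Sum>t<m. A $$ (i,t) * B $$ (t,j))"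
  using assms by (simp add: scalar_prod_def atLeast0LessThan)

lemma mv_entry:
  assumes "A \<in> carrier_mat n m" "v \<in> carrier_vec m" "i < n"
  shows "(A *\<^sub>v v) $ i = (\<Sum>t<m. A $$ (i,t) * v $ t)"
  using assms by (simp add: scalar_prod_def atLeast0LessThan)

lemma mat_eqI_carrier:
  assumes "A \<in> carrier_mat n m" "B \<in> carrier_mat n m"
    "\<And>i j. i < n \<Longrightarrow> j < m \<Longrightarrow> A $$ (i,j) = B $$ (i,j)"
  shows "A = B"
  using assms by (intro eq_matI) auto

context
  fixes smul :: "'k::field \<Rightarrow> 'h::ring_1 \<Rightarrow> 'h" and r :: "'h \<Rightarrow> 'k mat" and n :: nat
  assumes rep: "matrix_rep smul r n"
begin

lemma rep_carrier[simp]: "r h \<in> carrier_mat n n"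
  using rep unfolding matrix_rep_def by blast
lemma rep_dims[simp]: "dim_row (r h) = n" "dim_col (r h) = n"
  using carrier_matD[OF rep_carrier[of h]] by auto
lemma rep_mult: "r (a * b) = r a * r b"
  using rep unfolding matrix_rep_def by blast
lemma rep_add: "r (a + b) = r a + r b"
  using rep unfolding matrix_rep_def by blast
lemma rep_smul: "r (smul c a) = c \<cdot>\<^sub>m r a"
  using rep unfolding matrix_rep_def by blast
lemma rep_one: "r 1 = 1\<^sub>m n"
  using rep unfolding matrix_rep_def by blast

lemma rep_mult_entry: "i < n \<Longrightarrow> j < n \<Longrightarrow> r (a * b) $$ (i,j) = (\<Sum>t<n. r a $$ (i,t) * r b $$ (t,j))"
  unfolding rep_mult by (rule mult_entry) auto

lemma rep_add_entry: "i < n \<Longrightarrow> j < n \<Longrightarrow> r (a + b) $$ (i,j) = r a $$ (i,j) + r b $$ (i,j)"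
  unfolding rep_add by simp

lemma rep_smul_entry: "i < n \<Longrightarrow> j < n \<Longrightarrow> r (smul c a) $$ (i,j) = c * r a $$ (i,j)"
  unfolding rep_smul by simp

lemma rep_zero_entry: "i < n \<Longrightarrow> j < n \<Longrightarrow> r 0 $$ (i,j) = 0"
proof -
  assume ij: "i < n" "j < n"
  have "r (0 + 0) $$ (i,j) = r 0 $$ (i,j) + r 0 $$ (i,j)" using ij by (rule rep_add_entry)
  then show ?thesis by (metis add_cancel_right_right add_0)
qed

lemma rep_zero: "r 0 = 0\<^sub>m n n"
  by (rule mat_eqI_carrier[of _ n n]) (auto simp: rep_zero_entry)

lemma rep_sum_entry:
  assumes "finite S" "i < n" "j < n"
  shows "r (sum f S) $$ (i,j) = (\<Sum>x\<in>S. r (f x) $$ (i,j))"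
  using assms(1) by (induction S rule: finite_induct) (auto simp: rep_zero_entry rep_add_entry assms)

end


definition Emat :: "nat \<Rightarrow> nat \<Rightarrow> nat \<Rightarrow> 'a::zero_neq_one mat" where
  "Emat n x y = mat n n (\<lambda>(i,j). if i = x \<and> j = y then 1 else 0)"

lemma Emat_carrier[simp]: "Emat n x y \<in> carrier_mat n n"
  unfolding Emat_def by simp

lemma Emat_entry[simp]: "i < n \<Longrightarrow> j < n \<Longrightarrow> Emat n x y $$ (i,j) = (if i = x \<and> j = y then 1 else 0)"
  unfolding Emat_def by simp

lemma Emat_dims[simp]: "dim_row (Emat n x y) = n" "dim_col (Emat n x y) = n"
  unfolding Emat_def by simp_all

lemma double_delta:
  fixes f :: "nat \<Rightarrow> nat \<Rightarrow> 'a::comm_monoid_add"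
  assumes "i < n" "j < m"
  shows "(\<Sum>x<n. \<Sum>y<m. if x = i \<and> y = j then f x y else 0) = f i j"
proof -
  have "(\<Sum>x<n. \<Sum>y<m. if x = i \<and> y = j then f x y else 0)
      = (\<Sum>x<n. if x = i then (\<Sum>y<m. if y = j then f x y else 0) else 0)"
    by (intro sum.cong refl) auto
  also have "\<dots> = f i j" using assms by (simp add: sum.delta)
  finally show ?thesis .
qed

locale wed =
  fixes smul :: "'k::field \<Rightarrow> 'h::ring_1 \<Rightarrow> 'h" and rs :: "(('h \<Rightarrow> 'k mat) \<times> nat) list"
  assumes alg: "K_algebra smul"
    and irr: "\<forall>(r, n) \<in> set rs. irreducible_rep smul r n"
    and bij: "bij_betw (\<lambda>h. map (\<lambda>(r, n). r h) rs) UNIV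
          {Ms. length Ms = length rs \<and>
               (\<forall>i < length rs. Ms ! i \<in> carrier_mat (snd (rs ! i)) (snd (rs ! i)))}"
begin

abbreviation "N \<equiv> length rs"
definition R where "R p = fst (rs ! p)"
definition nn where "nn p = snd (rs ! p)"

lemma R_irr: "p < N \<Longrightarrow> irreducible_rep smul (R p) (nn p)"
proof -
  assume p: "p < N"
  then have "rs ! p \<in> set rs" by simp
  from bspec[OF irr this] have "case rs ! p of (r, n) \<Rightarrow> irreducible_rep smul r n" .
  then have "irreducible_rep smul (fst (rs ! p)) (snd (rs ! p))" by (cases "rs ! p") simp
  then show ?thesis unfolding R_def nn_def .
qed

lemma R_rep: assumes "p < N" shows "matrix_rep smul (R p) (nn p)"
  using R_irr[OF assms] unfolding irreducible_rep_def by blast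

lemma nn_pos: assumes "p < N" shows "0 < nn p"
  using R_irr[OF assms] unfolding irreducible_rep_def by blast

lemma R_carrier[simp]: "p < N \<Longrightarrow> R p h \<in> carrier_mat (nn p) (nn p)"
  using rep_carrier[OF R_rep] .

lemma inj_eq:
  assumes "\<And>q i j. q < N \<Longrightarrow> i < nn q \<Longrightarrow> j < nn q \<Longrightarrow> R q x $$ (i,j) = R q y $$ (i,j)"
  shows "x = y"
proof -
  have "map (\<lambda>(r, n). r x) rs = map (\<lambda>(r, n). r y) rs"
  proof (rule nth_equalityI)
    fix p assume p: "p < length (map (\<lambda>(r, n). r x) rs)"
    then have p': "p < N" by simp
    have "R p x = R p y"
      by (rule mat_eqI_carrier[OF R_carrier[OF p'] R_carrier[OF p']]) (rule assms[OF p'])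
    then show "map (\<lambda>(r, n). r x) rs ! p = map (\<lambda>(r, n). r y) rs ! p"
      using p' unfolding R_def by (cases "rs ! p") auto
  qed simp
  then show ?thesis using bij unfolding bij_betw_def inj_on_def by blast
qed

lemma surj_ex:
  assumes "\<And>q. q < N \<Longrightarrow> M q \<in> carrier_mat (nn q) (nn q)"
  shows "\<exists>h. \<forall>q<N. R q h = M q"
proof -
  have "map M [0..<N] \<in> {Ms. length Ms = length rs \<and>
               (\<forall>i < length rs. Ms ! i \<in> carrier_mat (snd (rs ! i)) (snd (rs ! i)))}"
    using assms unfolding nn_def by auto
  then obtain h where h: "map (\<lambda>(r, n). r h) rs = map M [0..<N]"
    using bij unfolding bij_betw_def by (metis (no_types, lifting) imageE)
  have "R q h = M q" if q: "q < N" for q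
  proof -
    have "map (\<lambda>(r, n). r h) rs ! q = map M [0..<N] ! q" using h by simp
    then show ?thesis using q unfolding R_def by (cases "rs ! q") auto
  qed
  then show ?thesis by blast
qed

definition blk where
  "blk p A = (SOME h. \<forall>q<N. R q h = (if q = p then A else 0\<^sub>m (nn q) (nn q)))"

lemma blk_R:
  assumes A: "A \<in> carrier_mat (nn p) (nn p)" and q: "q < N"
  shows "R q (blk p A) = (if q = p then A else 0\<^sub>m (nn q) (nn q))"
proof -
  have "\<exists>h. \<forall>q<N. R q h = (if q = p then A else 0\<^sub>m (nn q) (nn q))"
    by (rule surj_ex) (use A in auto)
  from someI_ex[OF this] q show ?thesis unfolding blk_def by blast
qed

lemma blk_R_entry:
  assumes A: "A \<in> carrier_mat (nn p) (nn p)" and q: "q < N" and ij: "i < nn q" "j < nn q"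
  shows "R q (blk p A) $$ (i,j) = (if q = p then A $$ (i,j) else 0)"
  using blk_R[OF A q] ij by simp

definition e where "e p = blk p (1\<^sub>m (nn p))"

lemma R_mult_entry: "q < N \<Longrightarrow> i < nn q \<Longrightarrow> j < nn q \<Longrightarrow>
   R q (a * b) $$ (i,j) = (\<Sum>t<nn q. R q a $$ (i,t) * R q b $$ (t,j))"
  by (rule rep_mult_entry[OF R_rep])

lemma blk_mult:
  assumes A: "A \<in> carrier_mat (nn p) (nn p)" and B: "B \<in> carrier_mat (nn p) (nn p)"
  shows "blk p A * blk p B = blk p (A * B)"
proof (rule inj_eq)
  fix q i j assume q: "q < N" and ij: "i < nn q" "j < nn q"
  have AB: "A * B \<in> carrier_mat (nn p) (nn p)" using A B by simp
  show "R q (blk p A * blk p B) $$ (i, j) = R q (blk p (A * B)) $$ (i, j)"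
    unfolding rep_mult[OF R_rep[OF q]] blk_R[OF A q] blk_R[OF B q] blk_R[OF AB q]
    using A B by (cases "q = p") simp_all
qed

lemma blk_add:
  assumes A: "A \<in> carrier_mat (nn p) (nn p)" and B: "B \<in> carrier_mat (nn p) (nn p)"
  shows "blk p A + blk p B = blk p (A + B)"
proof (rule inj_eq)
  fix q i j assume q: "q < N" and ij: "i < nn q" "j < nn q"
  have AB: "A + B \<in> carrier_mat (nn p) (nn p)" using A B by simp
  show "R q (blk p A + blk p B) $$ (i, j) = R q (blk p (A + B)) $$ (i, j)"
    unfolding rep_add[OF R_rep[OF q]] blk_R[OF A q] blk_R[OF B q] blk_R[OF AB q]
    using A B by (cases "q = p") simp_all
qed

lemma blk_zero: "blk p (0\<^sub>m (nn p) (nn p)) = 0"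
proof (rule inj_eq)
  fix q i j assume q: "q < N" and ij: "i < nn q" "j < nn q"
  show "R q (blk p (0\<^sub>m (nn p) (nn p))) $$ (i, j) = R q 0 $$ (i, j)"
    unfolding blk_R[OF zero_carrier_mat q] rep_zero[OF R_rep[OF q]] by simp
qed

lemma e_central: "p < N \<Longrightarrow> e p * h = h * e p"
proof (rule inj_eq)
  fix q i j assume p: "p < N" and q: "q < N" and ij: "i < nn q" "j < nn q"
  show "R q (e p * h) $$ (i, j) = R q (h * e p) $$ (i, j)"
    unfolding e_def rep_mult[OF R_rep[OF q]] blk_R[OF one_carrier_mat q]
    using R_carrier[OF q, of h] by (cases "q = p") simp_all
qed

lemma e_idem: "e p * e p = e p"
  unfolding e_def by (simp add: blk_mult)

lemma mult_e: "p < N \<Longrightarrow> h * e p = blk p (R p h)"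
proof (rule inj_eq)
  fix q i j assume p: "p < N" and q: "q < N" and ij: "i < nn q" "j < nn q"
  show "R q (h * e p) $$ (i, j) = R q (blk p (R p h)) $$ (i, j)"
    unfolding e_def rep_mult[OF R_rep[OF q]] blk_R[OF one_carrier_mat q] blk_R[OF R_carrier[OF p] q]
    using R_carrier[OF q, of h] by (cases "q = p") simp_all
qed

lemma one_sum: "1 = (\<Sum>p<N. e p)"
proof (rule inj_eq)
  fix q i j assume q: "q < N" and ij: "i < nn q" "j < nn q"
  have "R q (\<Sum>p<N. e p) $$ (i, j) = (\<Sum>p<N. R q (e p) $$ (i,j))"
    by (rule rep_sum_entry[OF R_rep[OF q]]) (use ij in auto)
  also have "\<dots> = (\<Sum>p<N. if p = q then 1\<^sub>m (nn q) $$ (i,j) else 0)"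
    unfolding e_def by (intro sum.cong refl) (use ij q in \<open>auto simp: blk_R_entry\<close>)
  also have "\<dots> = 1\<^sub>m (nn q) $$ (i,j)" using q by simp
  finally show "R q 1 $$ (i, j) = R q (\<Sum>p<N. e p) $$ (i, j)"
    unfolding rep_one[OF R_rep[OF q]] by simp
qed

lemma blk_smul:
  assumes A: "A \<in> carrier_mat (nn p) (nn p)"
  shows "smul c (blk p A) = blk p (c \<cdot>\<^sub>m A)"
proof (rule inj_eq)
  fix q i j assume q: "q < N" and ij: "i < nn q" "j < nn q"
  have cA: "c \<cdot>\<^sub>m A \<in> carrier_mat (nn p) (nn p)" using A by simp
  show "R q (smul c (blk p A)) $$ (i, j) = R q (blk p (c \<cdot>\<^sub>m A)) $$ (i, j)"
    unfolding rep_smul[OF R_rep[OF q]] blk_R[OF A q] blk_R[OF cA q] using A ij by (cases "q = p") simp_all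
qed

lemma blk_expand:
  assumes A: "A \<in> carrier_mat (nn p) (nn p)"
  shows "blk p A = (\<Sum>x<nn p. \<Sum>y<nn p. smul (A $$ (x,y)) (blk p (Emat (nn p) x y)))"
proof (rule inj_eq)
  fix q i j assume q: "q < N" and ij: "i < nn q" "j < nn q"
  have "R q (\<Sum>x<nn p. \<Sum>y<nn p. smul (A $$ (x,y)) (blk p (Emat (nn p) x y))) $$ (i,j)
     = (\<Sum>x<nn p. \<Sum>y<nn p. A $$ (x,y) * R q (blk p (Emat (nn p) x y)) $$ (i,j))"
    using ij by (simp add: rep_sum_entry[OF R_rep[OF q]] rep_smul_entry[OF R_rep[OF q]])
  also have "\<dots> = (\<Sum>x<nn p. \<Sum>y<nn p. if q = p then (if x = i \<and> y = j then A $$ (x,y) else 0) else 0)"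
    by (intro sum.cong refl) (use ij q in \<open>auto simp: blk_R_entry\<close>)
  also have "\<dots> = R q (blk p A) $$ (i,j)"
    using ij q A by (auto simp: blk_R_entry double_delta)
  finally show "R q (blk p A) $$ (i, j) =
     R q (\<Sum>x<nn p. \<Sum>y<nn p. smul (A $$ (x, y)) (blk p (Emat (nn p) x y))) $$ (i, j)" by simp
qed

lemma h_expand: "h = (\<Sum>p<N. blk p (R p h))"
proof (rule inj_eq)
  fix q i j assume q: "q < N" and ij: "i < nn q" "j < nn q"
  have "R q (\<Sum>p<N. blk p (R p h)) $$ (i, j) = (\<Sum>p<N. R q (blk p (R p h)) $$ (i,j))"
    by (rule rep_sum_entry[OF R_rep[OF q]]) (use ij in auto)
  also have "\<dots> = (\<Sum>p<N. if p = q then R q h $$ (i,j) else 0)"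
    by (intro sum.cong refl) (use ij q in \<open>auto simp: blk_R_entry\<close>)
  also have "\<dots> = R q h $$ (i,j)" using q by simp
  finally show "R q h $$ (i, j) = R q (\<Sum>p<N. blk p (R p h)) $$ (i, j)" by simp
qed

end

lemma mv_unit_entry:
  fixes M :: "'a::comm_ring_1 mat"
  assumes "M \<in> carrier_mat d d" "i < d" "j < d"
  shows "(M *\<^sub>v unit_vec d j) $ i = M $$ (i,j)"
proof -
  have "(M *\<^sub>v unit_vec d j) $ i = (\<Sum>t<d. M $$ (i,t) * unit_vec d j $ t)"
    by (rule mv_entry) (use assms in auto)
  also have "\<dots> = (\<Sum>t<d. if t = j then M $$ (i,t) else 0)"
    by (intro sum.cong refl) (use assms in auto)
  also have "\<dots> = M $$ (i,j)" using assms by (simp add: sum.delta)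
  finally show ?thesis .
qed

lemma idem_01:
  assumes irr: "irreducible_rep smul rho d" and M: "M \<in> carrier_mat d d"
    and idem: "M * M = M" and comm: "\<And>h. M * rho h = rho h * M"
  shows "M = 0\<^sub>m d d \<or> M = 1\<^sub>m d"
proof -
  have rep: "matrix_rep smul rho d" using irr unfolding irreducible_rep_def by blast
  define W where "W = {M *\<^sub>v v | v. v \<in> carrier_vec d}"
  have Wsub: "W \<subseteq> carrier_vec d" unfolding W_def using M by auto
  have W0: "0\<^sub>v d \<in> W"
  proof -
    have "M *\<^sub>v 0\<^sub>v d = 0\<^sub>v d" using M by (intro eq_vecI) auto
    then show ?thesis unfolding W_def by (intro CollectI exI[of _ "0\<^sub>v d"]) auto
  qed
  have Wadd: "\<forall>v\<in>W. \<forall>w\<in>W. v + w \<in> W"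
  proof (intro ballI)
    fix v w assume "v \<in> W" "w \<in> W"
    then obtain a b where ab: "v = M *\<^sub>v a" "a \<in> carrier_vec d" "w = M *\<^sub>v b" "b \<in> carrier_vec d"
      unfolding W_def by blast
    have "v + w = M *\<^sub>v (a + b)" using ab M by (simp add: mult_add_distrib_mat_vec)
    then show "v + w \<in> W" unfolding W_def using ab by auto
  qed
  have Wsc: "\<forall>c. \<forall>v\<in>W. c \<cdot>\<^sub>v v \<in> W"
  proof (intro allI ballI)
    fix c v assume "v \<in> W"
    then obtain a where a: "v = M *\<^sub>v a" "a \<in> carrier_vec d" unfolding W_def by blast
    have "c \<cdot>\<^sub>v v = M *\<^sub>v (c \<cdot>\<^sub>v a)" using a M by (simp add: mult_mat_vec)
    then show "c \<cdot>\<^sub>v v \<in> W" unfolding W_def using a by auto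
  qed
  have Winv: "\<forall>h. \<forall>v\<in>W. rho h *\<^sub>v v \<in> W"
  proof (intro allI ballI)
    fix h v assume "v \<in> W"
    then obtain a where a: "v = M *\<^sub>v a" "a \<in> carrier_vec d" unfolding W_def by blast
    have rh: "rho h \<in> carrier_mat d d" using rep_carrier[OF rep] .
    have "rho h *\<^sub>v v = (rho h * M) *\<^sub>v a" using a M rh by simp
    also have "\<dots> = (M * rho h) *\<^sub>v a" using comm by simp
    also have "\<dots> = M *\<^sub>v (rho h *\<^sub>v a)" using a M rh by simp
    finally show "rho h *\<^sub>v v \<in> W" unfolding W_def using a rh by auto
  qed
  have "W = {0\<^sub>v d} \<or> W = carrier_vec d"
    using irr Wsub W0 Wadd Wsc Winv unfolding irreducible_rep_def by blast
  then show ?thesis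
  proof
    assume W: "W = {0\<^sub>v d}"
    have "M $$ (i,j) = 0" if ij: "i < d" "j < d" for i j
    proof -
      have "M *\<^sub>v unit_vec d j \<in> W" unfolding W_def by auto
      then have "M *\<^sub>v unit_vec d j = 0\<^sub>v d" using W by simp
      then have "(M *\<^sub>v unit_vec d j) $ i = 0" using ij by simp
      then show ?thesis using mv_unit_entry[OF M ij] by simp
    qed
    then have "M = 0\<^sub>m d d" by (intro mat_eqI_carrier[OF M]) auto
    then show ?thesis ..
  next
    assume W: "W = carrier_vec d"
    have "M $$ (i,j) = 1\<^sub>m d $$ (i,j)" if ij: "i < d" "j < d" for i j
    proof -
      have "unit_vec d j \<in> W" using W by simp
      then obtain a where a: "unit_vec d j = M *\<^sub>v a" "a \<in> carrier_vec d" unfolding W_def by blast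
      have "M *\<^sub>v unit_vec d j = (M * M) *\<^sub>v a" using a M by simp
      also have "\<dots> = unit_vec d j" using idem a by simp
      finally have "(M *\<^sub>v unit_vec d j) $ i = unit_vec d j $ i" by simp
      then show ?thesis using mv_unit_entry[OF M ij] ij by simp
    qed
    then have "M = 1\<^sub>m d" by (intro mat_eqI_carrier[OF M]) auto
    then show ?thesis ..
  qed
qed

lemma Emat_mult:
  assumes "x < n" "y < n" "z < n" "w < n"
  shows "Emat n x y * Emat n z w = (if y = z then Emat n x w else (0\<^sub>m n n :: 'a::comm_ring_1 mat))"
proof (rule mat_eqI_carrier[of _ n n])
  fix i j assume ij: "i < n" "j < n"
  have "(Emat n x y * Emat n z w) $$ (i,j) = (\<Sum>t<n. (Emat n x y :: 'a mat) $$ (i,t) * Emat n z w $$ (t,j))"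
    by (rule mult_entry) (use ij in auto)
  also have "\<dots> = (\<Sum>t<n. if t = y then (if i = x \<and> y = z \<and> j = w then 1 else 0) else (0::'a))"
    by (intro sum.cong refl) (use ij in auto)
  also have "\<dots> = (if i = x \<and> y = z \<and> j = w then 1 else 0)" using assms by (simp add: sum.delta)
  finally have eq: "(Emat n x y * Emat n z w) $$ (i,j) = (if i = x \<and> y = z \<and> j = w then 1 else (0::'a))" .
  have eq2: "(if y = z then Emat n x w else 0\<^sub>m n n) $$ (i,j) = (if i = x \<and> y = z \<and> j = w then 1 else (0::'a))"
    using ij by auto
  show "(Emat n x y * Emat n z w :: 'a mat) $$ (i,j) = (if y = z then Emat n x w else 0\<^sub>m n n) $$ (i,j)"
    by (simp only: eq eq2)
qed (auto split: if_splits)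

lemma mult_Emat_entry:
  assumes A: "A \<in> carrier_mat n n" and "y < n" "a < n" "b < n"
  shows "(A * Emat n y x) $$ (a,b) = (if b = x then A $$ (a,y) else (0::'a::comm_ring_1))"
proof -
  have "(A * Emat n y x) $$ (a,b) = (\<Sum>t<n. A $$ (a,t) * Emat n y x $$ (t,b))"
    by (rule mult_entry) (use assms in auto)
  also have "\<dots> = (\<Sum>t<n. if t = y then (if b = x then A $$ (a,y) else 0) else 0)"
    by (intro sum.cong refl) (use assms in auto)
  also have "\<dots> = (if b = x then A $$ (a,y) else 0)" using assms by (simp add: sum.delta)
  finally show ?thesis .
qed

lemma Emat_mult_entry:
  assumes A: "A \<in> carrier_mat n n" and "x < n" "a < n" "b < n"
  shows "(Emat n y x * A) $$ (a,b) = (if a = y then A $$ (x,b) else (0::'a::comm_ring_1))"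
proof -
  have "(Emat n y x * A) $$ (a,b) = (\<Sum>t<n. Emat n y x $$ (a,t) * A $$ (t,b))"
    by (rule mult_entry) (use assms in auto)
  also have "\<dots> = (\<Sum>t<n. if t = x then (if a = y then A $$ (x,b) else 0) else 0)"
    by (intro sum.cong refl) (use assms in auto)
  also have "\<dots> = (if a = y then A $$ (x,b) else 0)" using assms by (simp add: sum.delta)
  finally show ?thesis .
qed


context wed begin

lemma struct:
  assumes irr: "irreducible_rep smul rho d"
  shows "\<exists>p<N. \<exists>P Q. P \<in> carrier_mat d (nn p) \<and> Q \<in> carrier_mat (nn p) d \<and>
     P * Q = 1\<^sub>m d \<and> Q * P = 1\<^sub>m (nn p) \<and> (\<forall>h. rho h = P * R p h * Q)"
proof -
  have rep: "matrix_rep smul rho d" and d0: "0 < d" using irr unfolding irreducible_rep_def by blast+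
  have rc: "\<And>h. rho h \<in> carrier_mat d d" using rep_carrier[OF rep] .
  have e01: "rho (e p) = 0\<^sub>m d d \<or> rho (e p) = 1\<^sub>m d" if p: "p < N" for p
  proof (rule idem_01[OF irr rc])
    show "rho (e p) * rho (e p) = rho (e p)" using e_idem rep_mult[OF rep] by metis
    show "rho (e p) * rho h = rho h * rho (e p)" for h
      using e_central[OF p] rep_mult[OF rep] by metis
  qed
  have "\<exists>p<N. rho (e p) = 1\<^sub>m d"
  proof (rule ccontr)
    assume "\<not> ?thesis"
    then have z: "\<And>p. p < N \<Longrightarrow> rho (e p) = 0\<^sub>m d d" using e01 by blast
    have "rho 1 $$ (0,0) = rho (\<Sum>p<N. e p) $$ (0,0)" using one_sum by simp
    also have "\<dots> = (\<Sum>p<N. rho (e p) $$ (0,0))" by (rule rep_sum_entry[OF rep]) (use d0 in auto)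
    also have "\<dots> = 0" using z d0 by simp
    finally show False using rep_one[OF rep] d0 by simp
  qed
  then obtain p where p: "p < N" and ep: "rho (e p) = 1\<^sub>m d" by blast
  define n where "n = nn p"
  have n0: "0 < n" using nn_pos[OF p] n_def by simp
  define sig where "sig A = rho (blk p A)" for A
  have sigc: "sig A \<in> carrier_mat d d" for A unfolding sig_def by (rule rc)
  have rho_sig: "rho h = sig (R p h)" for h
  proof -
    have "rho h = rho h * rho (e p)" using ep rc[of h] by simp
    also have "\<dots> = rho (h * e p)" using rep_mult[OF rep] by simp
    also have "\<dots> = sig (R p h)" unfolding mult_e[OF p] sig_def ..
    finally show ?thesis .
  qed
  have sig_mult: "sig (A * B) = sig A * sig B" if "A \<in> carrier_mat n n" "B \<in> carrier_mat n n" for A B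
    unfolding sig_def using blk_mult[of A p B] that n_def rep_mult[OF rep] by metis
  define F where "F x y = sig (Emat n x y)" for x y
  have Fc: "F x y \<in> carrier_mat d d" for x y unfolding F_def by (rule sigc)
  have LIN: "sig A $$ (i,j) = (\<Sum>x<n. \<Sum>y<n. A $$ (x,y) * F x y $$ (i,j))"
    if A: "A \<in> carrier_mat n n" and ij: "i < d" "j < d" for A i j
  proof -
    have "sig A = rho (\<Sum>x<n. \<Sum>y<n. smul (A $$ (x,y)) (blk p (Emat n x y)))"
      unfolding sig_def n_def using blk_expand[of A p] A n_def by simp
    then show ?thesis
      using ij by (simp add: rep_sum_entry[OF rep] rep_smul_entry[OF rep] F_def sig_def)
  qed
  have sig_one: "sig (1\<^sub>m n) = 1\<^sub>m d" unfolding sig_def n_def using ep e_def by simp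
  have sig_zero: "sig (0\<^sub>m n n) = 0\<^sub>m d d" unfolding sig_def n_def blk_zero rep_zero[OF rep] ..
  have Fmult: "F x y * F z w = (if y = z then F x w else 0\<^sub>m d d)"
    if "x < n" "y < n" "z < n" "w < n" for x y z w
  proof -
    have "F x y * F z w = sig (Emat n x y * Emat n z w)" unfolding F_def by (rule sig_mult[symmetric]) auto
    also have "\<dots> = (if y = z then F x w else 0\<^sub>m d d)"
      unfolding Emat_mult[OF that] F_def using sig_zero by simp
    finally show ?thesis .
  qed
  have "\<exists>x0<n. F x0 x0 \<noteq> 0\<^sub>m d d"
  proof (rule ccontr)
    assume "\<not> ?thesis"
    then have z: "\<And>x. x < n \<Longrightarrow> F x x = 0\<^sub>m d d" by blast
    have "sig (1\<^sub>m n) $$ (0,0) = (\<Sum>x<n. \<Sum>y<n. 1\<^sub>m n $$ (x,y) * F x y $$ (0,0))"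
      by (rule LIN) (use d0 in auto)
    also have "\<dots> = (\<Sum>x<n. \<Sum>y<n. 0)"
      by (intro sum.cong refl) (use z d0 in auto)
    finally show False using sig_one d0 by simp
  qed
  then obtain x0 where x0: "x0 < n" "F x0 x0 \<noteq> 0\<^sub>m d d" by blast
  have "\<exists>i1<d. \<exists>j0<d. F x0 x0 $$ (i1,j0) \<noteq> 0"
  proof (rule ccontr)
    assume "\<not> ?thesis"
    then have "F x0 x0 = 0\<^sub>m d d" by (intro mat_eqI_carrier[OF Fc]) auto
    with x0 show False by simp
  qed
  then obtain i1 j0 where ij0: "i1 < d" "j0 < d" "F x0 x0 $$ (i1,j0) \<noteq> 0" by blast
  define c0 where "c0 = F x0 x0 $$ (i1,j0)"
  have c0: "c0 \<noteq> 0" using ij0 c0_def by simp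
  define P where "P = mat d n (\<lambda>(i,x). F x x0 $$ (i,j0))"
  define Q where "Q = mat n d (\<lambda>(x,i). F x0 x $$ (i1,i) / c0)"
  have Pc: "P \<in> carrier_mat d n" unfolding P_def by simp
  have Qc: "Q \<in> carrier_mat n d" unfolding Q_def by simp
  have QP: "Q * P = 1\<^sub>m n"
  proof (rule mat_eqI_carrier[of _ n n])
    fix x y assume xy: "x < n" "y < n"
    have "(Q * P) $$ (x,y) = (\<Sum>i<d. Q $$ (x,i) * P $$ (i,y))" by (rule mult_entry[OF Qc Pc xy])
    also have "\<dots> = (\<Sum>i<d. F x0 x $$ (i1,i) * F y x0 $$ (i,j0)) / c0"
      unfolding sum_divide_distrib by (intro sum.cong refl) (use xy in \<open>auto simp: P_def Q_def\<close>)
    also have "(\<Sum>i<d. F x0 x $$ (i1,i) * F y x0 $$ (i,j0)) = (F x0 x * F y x0) $$ (i1,j0)"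
      by (rule mult_entry[symmetric, OF Fc Fc ij0(1,2)])
    also have "\<dots> = (if x = y then c0 else 0)"
      unfolding Fmult[OF x0(1) xy(1) xy(2) x0(1)] c0_def using ij0 by simp
    finally show "(Q * P) $$ (x,y) = 1\<^sub>m n $$ (x,y)" using c0 xy by simp
  qed (use Qc Pc in auto)
  have sigP: "sig A * P = P * A" if A: "A \<in> carrier_mat n n" for A
  proof (rule mat_eqI_carrier[of _ d n])
    fix i y assume iy: "i < d" "y < n"
    have "(sig A * P) $$ (i,y) = (\<Sum>k<d. sig A $$ (i,k) * F y x0 $$ (k,j0))"
      unfolding mult_entry[OF sigc Pc iy] by (intro sum.cong refl) (use iy in \<open>auto simp: P_def\<close>)
    also have "\<dots> = (sig A * F y x0) $$ (i,j0)" by (rule mult_entry[symmetric, OF sigc Fc iy(1) ij0(2)])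
    also have "sig A * F y x0 = sig (A * Emat n y x0)" unfolding F_def by (rule sig_mult[symmetric, OF A]) simp
    also have "sig (A * Emat n y x0) $$ (i,j0) = (\<Sum>a<n. \<Sum>b<n. (A * Emat n y x0) $$ (a,b) * F a b $$ (i,j0))"
      by (rule LIN) (use A iy ij0 in auto)
    also have "\<dots> = (\<Sum>a<n. \<Sum>b<n. if b = x0 then A $$ (a,y) * F a x0 $$ (i,j0) else 0)"
      by (intro sum.cong refl) (use A iy in \<open>auto simp: mult_Emat_entry simp del: index_mult_mat\<close>)
    also have "\<dots> = (\<Sum>a<n. A $$ (a,y) * F a x0 $$ (i,j0))" using x0 by (simp add: sum.delta)
    also have "\<dots> = (\<Sum>a<n. P $$ (i,a) * A $$ (a,y))"
      by (intro sum.cong refl) (use iy in \<open>auto simp: P_def\<close>)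
    also have "\<dots> = (P * A) $$ (i,y)" by (rule mult_entry[symmetric, OF Pc A iy])
    finally show "(sig A * P) $$ (i,y) = (P * A) $$ (i,y)" .
  qed (use Pc A sigc[of A] in auto)
  have Qsig: "Q * sig A = A * Q" if A: "A \<in> carrier_mat n n" for A
  proof (rule mat_eqI_carrier[of _ n d])
    fix x i assume xi: "x < n" "i < d"
    have "(Q * sig A) $$ (x,i) = (\<Sum>k<d. F x0 x $$ (i1,k) * sig A $$ (k,i)) / c0"
      unfolding mult_entry[OF Qc sigc xi] sum_divide_distrib
      by (intro sum.cong refl) (use xi in \<open>auto simp: Q_def\<close>)
    also have "(\<Sum>k<d. F x0 x $$ (i1,k) * sig A $$ (k,i)) = (F x0 x * sig A) $$ (i1,i)"
      by (rule mult_entry[symmetric, OF Fc sigc ij0(1) xi(2)])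
    also have "F x0 x * sig A = sig (Emat n x0 x * A)" unfolding F_def by (rule sig_mult[symmetric, OF _ A]) simp
    also have "sig (Emat n x0 x * A) $$ (i1,i) = (\<Sum>a<n. \<Sum>b<n. (Emat n x0 x * A) $$ (a,b) * F a b $$ (i1,i))"
      by (rule LIN) (use A xi ij0 in auto)
    also have "\<dots> = (\<Sum>a<n. if a = x0 then (\<Sum>b<n. A $$ (x,b) * F x0 b $$ (i1,i)) else 0)"
      by (intro sum.cong refl) (use A xi in \<open>auto simp: Emat_mult_entry simp del: index_mult_mat\<close>)
    also have "\<dots> = (\<Sum>b<n. A $$ (x,b) * F x0 b $$ (i1,i))" using x0 by (simp add: sum.delta)
    finally have "(Q * sig A) $$ (x,i) = (\<Sum>b<n. A $$ (x,b) * F x0 b $$ (i1,i)) / c0" .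
    also have "\<dots> = (\<Sum>b<n. A $$ (x,b) * Q $$ (b,i))"
      unfolding sum_divide_distrib by (intro sum.cong refl) (use xi in \<open>auto simp: Q_def\<close>)
    also have "\<dots> = (A * Q) $$ (x,i)" by (rule mult_entry[symmetric, OF A Qc xi])
    finally show "(Q * sig A) $$ (x,i) = (A * Q) $$ (x,i)" .
  qed (use Qc A sigc[of A] in auto)
  define M where "M = P * Q"
  have Mc: "M \<in> carrier_mat d d" unfolding M_def using Pc Qc by simp
  have MM: "M * M = M"
  proof -
    have "M * M = P * (Q * (P * Q))" unfolding M_def
      by (rule assoc_mult_mat[OF Pc Qc Mc[unfolded M_def]])
    also have "Q * (P * Q) = (Q * P) * Q" by (rule assoc_mult_mat[symmetric, OF Qc Pc Qc])
    finally show ?thesis using QP Qc M_def by simp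
  qed
  have Mcomm: "M * rho h = rho h * M" for h
  proof -
    have Rc: "R p h \<in> carrier_mat n n" using R_carrier[OF p] n_def by simp
    have "M * rho h = P * (Q * sig (R p h))" unfolding M_def rho_sig
      using Pc Qc sigc by (simp add: assoc_mult_mat[of _ d n _ d _ d])
    also have "\<dots> = P * (R p h * Q)" using Qsig[OF Rc] by simp
    also have "\<dots> = (P * R p h) * Q" using Pc Qc Rc by (simp add: assoc_mult_mat[of _ d n _ n _ d])
    also have "\<dots> = (sig (R p h) * P) * Q" using sigP[OF Rc] by simp
    also have "\<dots> = rho h * M" unfolding M_def rho_sig
      using Pc Qc sigc by (simp add: assoc_mult_mat[of _ d d _ n _ d])
    finally show ?thesis .
  qed
  have "M = 0\<^sub>m d d \<or> M = 1\<^sub>m d" by (rule idem_01[OF irr Mc MM Mcomm])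
  moreover have "M \<noteq> 0\<^sub>m d d"
  proof
    assume M0: "M = 0\<^sub>m d d"
    have "Q * M = (Q * P) * Q" unfolding M_def by (rule assoc_mult_mat[symmetric, OF Qc Pc Qc])
    then have "Q * M = Q" using QP Qc by simp
    then have "Q * M * P = 1\<^sub>m n" using QP by simp
    moreover have "Q * M * P = 0\<^sub>m n n" using M0 Qc Pc by simp
    ultimately have "(1\<^sub>m n :: 'k mat) $$ (0,0) = 0\<^sub>m n n $$ (0,0)" by simp
    then show False using n0 by simp
  qed
  ultimately have PQ: "P * Q = 1\<^sub>m d" unfolding M_def by simp
  have "rho h = P * R p h * Q" for h
  proof -
    have Rc: "R p h \<in> carrier_mat n n" using R_carrier[OF p] n_def by simp
    have "rho h = sig (R p h) * (P * Q)" unfolding rho_sig PQ using sigc[of "R p h"] by simp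
    also have "\<dots> = (sig (R p h) * P) * Q" using Pc Qc sigc by (simp add: assoc_mult_mat[of _ d d _ n _ d])
    also have "\<dots> = P * R p h * Q" using sigP[OF Rc] by simp
    finally show ?thesis .
  qed
  then show ?thesis using p Pc Qc PQ QP n_def by blast
qed

end

lemma triple_entry:
  assumes P: "P \<in> carrier_mat d n" and R: "R \<in> carrier_mat n n" and Q: "Q \<in> carrier_mat n d"
    and ij: "i < d" "j < d"
  shows "(P * R * Q) $$ (i,j) = (\<Sum>x<n. \<Sum>y<n. P $$ (i,x) * R $$ (x,y) * Q $$ (y,j))"
proof -
  have PR: "P * R \<in> carrier_mat d n" using P R by simp
  have "(P * R * Q) $$ (i,j) = (\<Sum>y<n. (P * R) $$ (i,y) * Q $$ (y,j))"
    by (rule mult_entry[OF PR Q ij])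
  also have "\<dots> = (\<Sum>y<n. \<Sum>x<n. P $$ (i,x) * R $$ (x,y) * Q $$ (y,j))"
    by (intro sum.cong refl) (simp add: mult_entry[OF P R ij(1)] sum_distrib_right)
  also have "\<dots> = (\<Sum>x<n. \<Sum>y<n. P $$ (i,x) * R $$ (x,y) * Q $$ (y,j))"
    by (rule sum.swap)
  finally show ?thesis .
qed

lemma trace_conj:
  fixes P :: "'a::comm_ring_1 mat"
  assumes P: "P \<in> carrier_mat d n" and R: "R \<in> carrier_mat n n" and Q: "Q \<in> carrier_mat n d"
    and QP: "Q * P = 1\<^sub>m n"
  shows "(\<Sum>i<d. (P * R * Q) $$ (i,i)) = (\<Sum>x<n. R $$ (x,x))"
proof -
  have "(\<Sum>i<d. (P * R * Q) $$ (i,i)) = (\<Sum>i<d. \<Sum>x<n. \<Sum>y<n. P $$ (i,x) * R $$ (x,y) * Q $$ (y,i))"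
    by (intro sum.cong refl) (simp add: triple_entry[OF P R Q])
  also have "\<dots> = (\<Sum>x<n. \<Sum>i<d. \<Sum>y<n. P $$ (i,x) * R $$ (x,y) * Q $$ (y,i))"
    by (rule sum.swap)
  also have "\<dots> = (\<Sum>x<n. \<Sum>y<n. \<Sum>i<d. P $$ (i,x) * R $$ (x,y) * Q $$ (y,i))"
    by (rule sum.cong[OF refl], rule sum.swap)
  also have "\<dots> = (\<Sum>x<n. \<Sum>y<n. R $$ (x,y) * (Q * P) $$ (y,x))"
  proof (intro sum.cong refl)
    fix x y assume xy: "x \<in> {..<n}" "y \<in> {..<n}"
    have "(Q * P) $$ (y,x) = (\<Sum>i<d. Q $$ (y,i) * P $$ (i,x))" by (rule mult_entry[OF Q P]) (use xy in auto)
    then show "(\<Sum>i<d. P $$ (i,x) * R $$ (x,y) * Q $$ (y,i)) = R $$ (x,y) * (Q * P) $$ (y,x)"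
      by (simp add: sum_distrib_left algebra_simps)
  qed
  also have "\<dots> = (\<Sum>x<n. \<Sum>y<n. if y = x then R $$ (x,x) else 0)"
    unfolding QP by (intro sum.cong refl) auto
  also have "\<dots> = (\<Sum>x<n. R $$ (x,x))" by (simp add: sum.delta)
  finally show ?thesis .
qed

lemma sym_trace_sum:
  assumes tr: "symmetrizing_trace smul tau" and fin: "finite S"
  shows "tau (sum f S) = (\<Sum>x\<in>S. tau (f x))"
proof -
  have add: "\<And>a b. tau (a + b) = tau a + tau b" using tr unfolding symmetrizing_trace_def by blast
  have z: "tau 0 = 0" using add[of 0 0] by (metis add_cancel_right_right add_0)
  show ?thesis using fin by (induction S rule: finite_induct) (auto simp: z add)
qed

context wed begin

lemma char_struct:
  assumes irr: "irreducible_rep smul rho d"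
  shows "\<exists>p<N. character rho = character (R p) \<and>
     (\<exists>P Q. P \<in> carrier_mat d (nn p) \<and> Q \<in> carrier_mat (nn p) d \<and>
     P * Q = 1\<^sub>m d \<and> Q * P = 1\<^sub>m (nn p) \<and> (\<forall>h. rho h = P * R p h * Q))"
proof -
  obtain p P Q where p: "p < N" and PQ: "P \<in> carrier_mat d (nn p)" "Q \<in> carrier_mat (nn p) d"
     "P * Q = 1\<^sub>m d" "Q * P = 1\<^sub>m (nn p)" and rh: "\<forall>h. rho h = P * R p h * Q"
    using struct[OF irr] by blast
  have rep: "matrix_rep smul rho d" using irr unfolding irreducible_rep_def by blast
  have "character rho h = character (R p) h" for h
  proof -
    have "character rho h = (\<Sum>i<d. rho h $$ (i,i))"
      unfolding character_def using rep_dims[OF rep] by simp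
    also have "\<dots> = (\<Sum>x<nn p. R p h $$ (x,x))"
      unfolding rh[rule_format] by (rule trace_conj[OF PQ(1) R_carrier[OF p] PQ(2) PQ(4)])
    also have "\<dots> = character (R p) h"
      unfolding character_def using rep_dims[OF R_rep[OF p]] by simp
    finally show ?thesis .
  qed
  then show ?thesis using p PQ rh by blast
qed

lemma vs: "vector_space smul"
  using alg unfolding K_algebra_def by blast

lemma smul_mult_left: "smul c a * b = smul c (a * b)"
  using alg unfolding K_algebra_def by metis

lemma basis_finite:
  assumes "is_K_basis smul B"
  shows "finite B"
proof -
  interpret v: vector_space smul by (rule vs)
  define G where "G = (\<Union>p<N. \<Union>x<nn p. \<Union>y<nn p. {blk p (Emat (nn p) x y)})"
  have fG: "finite G" unfolding G_def by simp
  have "h \<in> v.span G" for h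
  proof -
    have "h = (\<Sum>p<N. blk p (R p h))" by (rule h_expand)
    also have "\<dots> = (\<Sum>p<N. \<Sum>x<nn p. \<Sum>y<nn p. smul (R p h $$ (x,y)) (blk p (Emat (nn p) x y)))"
      by (intro sum.cong refl) (rule blk_expand, simp)
    also have "\<dots> \<in> v.span G"
      by (intro v.span_sum v.span_scale v.span_base) (auto simp: G_def)
    finally show ?thesis .
  qed
  then have "B \<subseteq> v.span G" by blast
  moreover have "v.independent B" using assms unfolding is_K_basis_def by blast
  ultimately show ?thesis using v.independent_span_bound[OF fG] by blast
qed

lemma basis_expand:
  assumes tr: "symmetrizing_trace smul tau" and sb: "star_symmetric_basis smul tau star B"
  shows "h = (\<Sum>b\<in>B. smul (tau (h * star b)) b)"
proof -
  interpret v: vector_space smul by (rule vs)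
  have bas: "is_K_basis smul B" using sb unfolding star_symmetric_basis_def by blast
  have fin: "finite B" by (rule basis_finite[OF bas])
  have orth: "\<And>b c. b \<in> B \<Longrightarrow> c \<in> B \<Longrightarrow> tau (b * star c) = (if b = c then 1 else 0)"
    using sb unfolding star_symmetric_basis_def by blast
  have tsm: "\<And>a x. tau (smul a x) = a * tau x" using tr unfolding symmetrizing_trace_def by blast
  have "h \<in> v.span B" using bas unfolding is_K_basis_def by blast
  then obtain u where hu: "h = (\<Sum>v\<in>B. smul (u v) v)" using v.span_finite[OF fin] by blast
  have "tau (h * star c) = u c" if c: "c \<in> B" for c
  proof -
    have "h * star c = (\<Sum>v\<in>B. smul (u v) (v * star c))"
      unfolding hu sum_distrib_right smul_mult_left ..
    then have "tau (h * star c) = (\<Sum>v\<in>B. u v * tau (v * star c))"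
      by (simp add: sym_trace_sum[OF tr fin] tsm)
    also have "\<dots> = (\<Sum>v\<in>B. if v = c then u v else 0)"
      by (intro sum.cong refl) (simp add: orth c)
    also have "\<dots> = u c" using c fin by (simp add: sum.delta')
    finally show ?thesis .
  qed
  then show ?thesis unfolding hu[symmetric] using hu by (metis (no_types, lifting) sum.cong)
qed

end

context wed begin

lemma schur_rel:
  assumes tr: "symmetrizing_trace smul tau" and sc: "schur_elements smul tau c"
    and sb: "star_symmetric_basis smul tau star B" and irr: "irreducible_rep smul rho d"
    and ijkl: "i < d" "j < d" "k < d" "l < d"
  shows "(\<Sum>b\<in>B. rho b $$ (i,j) * rho (star b) $$ (k,l)) = c (character rho) * (if i = l \<and> j = k then 1 else 0)"
proof -
  obtain p0 P Q where p0: "p0 < N" and chr: "character rho = character (R p0)"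
     and PQ: "P \<in> carrier_mat d (nn p0)" "Q \<in> carrier_mat (nn p0) d"
     "P * Q = 1\<^sub>m d" "Q * P = 1\<^sub>m (nn p0)" and rh: "\<forall>h. rho h = P * R p0 h * Q"
    using char_struct[OF irr] by blast
  define n where "n = nn p0"
  have rep: "matrix_rep smul rho d" using irr unfolding irreducible_rep_def by blast
  have rc: "\<And>h. rho h \<in> carrier_mat d d" using rep_carrier[OF rep] .
  define cc where "cc = c (character rho)"
  have inirr: "character rho \<in> irr_chars smul" unfolding irr_chars_def using irr by blast
  have finirr: "finite (irr_chars smul)" and cnz: "\<And>\<chi>. \<chi> \<in> irr_chars smul \<Longrightarrow> c \<chi> \<noteq> 0"
    and tau_eq: "\<And>h. tau h = (\<Sum>\<chi> \<in> irr_chars smul. inverse (c \<chi>) * \<chi> h)"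
    using sc unfolding schur_elements_def by blast+
  have cc0: "cc \<noteq> 0" unfolding cc_def using cnz[OF inirr] .
  have charR: "\<exists>q<N. \<chi> = character (R q)" if chi: "\<chi> \<in> irr_chars smul" for \<chi>
  proof -
    obtain rho' d' where "\<chi> = character rho'" "irreducible_rep smul rho' d'"
      using chi unfolding irr_chars_def by blast
    then show ?thesis using char_struct by blast
  qed
  define A where "A = Q * Emat d l k * P"
  have QE: "Q * Emat d l k \<in> carrier_mat (nn p0) d" by (rule mult_carrier_mat[OF PQ(2)]) simp
  have Ac: "A \<in> carrier_mat n n" unfolding A_def n_def by (rule mult_carrier_mat[OF QE PQ(1)])
  define h where "h = blk p0 A"
  have rhoh: "rho h = Emat d l k"
  proof -
    have E: "Emat d l k \<in> carrier_mat d d" by simp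
    have "rho h = P * A * Q" unfolding h_def rh[rule_format] using blk_R[OF Ac[unfolded n_def] p0] by simp
    also have "P * A = (P * (Q * Emat d l k)) * P" unfolding A_def
      by (rule assoc_mult_mat[symmetric, OF PQ(1) QE PQ(1)])
    also have "P * (Q * Emat d l k) = (P * Q) * Emat d l k"
      by (rule assoc_mult_mat[symmetric, OF PQ(1) PQ(2) E])
    also have "(P * Q) * Emat d l k = Emat d l k" using PQ(3) by simp
    also have "Emat d l k * P * Q = Emat d l k * (P * Q)" by (rule assoc_mult_mat[OF E PQ(1) PQ(2)])
    also have "\<dots> = Emat d l k" using PQ E by simp
    finally show ?thesis .
  qed
  have tauh: "tau (h * y) = inverse cc * rho y $$ (k,l)" for y
  proof -
    have zero: "\<chi> (h * y) = 0" if chi: "\<chi> \<in> irr_chars smul - {character rho}" for \<chi>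
    proof -
      obtain q where q: "q < N" "\<chi> = character (R q)" using charR chi by blast
      then have qp: "q \<noteq> p0" using chi chr by auto
      have "R q (h * y) = R q h * R q y" by (rule rep_mult[OF R_rep[OF q(1)]])
      also have "R q h = 0\<^sub>m (nn q) (nn q)" unfolding h_def using blk_R[OF Ac[unfolded n_def] q(1)] qp by simp
      also have "0\<^sub>m (nn q) (nn q) * R q y = 0\<^sub>m (nn q) (nn q)"
        by (rule left_mult_zero_mat[OF R_carrier[OF q(1)]])
      finally have "R q (h * y) = 0\<^sub>m (nn q) (nn q)" .
      then show ?thesis unfolding q(2) character_def by simp
    qed
    have "tau (h * y) = (\<Sum>\<chi> \<in> irr_chars smul. inverse (c \<chi>) * \<chi> (h * y))" by (rule tau_eq)
    also have "\<dots> = inverse cc * character rho (h * y) + (\<Sum>\<chi> \<in> irr_chars smul - {character rho}. inverse (c \<chi>) * \<chi> (h * y))"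
      unfolding cc_def by (rule sum.remove[OF finirr inirr])
    also have "(\<Sum>\<chi> \<in> irr_chars smul - {character rho}. inverse (c \<chi>) * \<chi> (h * y)) = 0"
      by (rule sum.neutral) (simp add: zero)
    also have "character rho (h * y) = (\<Sum>a<d. rho (h * y) $$ (a,a))"
      unfolding character_def using rep_dims[OF rep] by simp
    also have "\<dots> = (\<Sum>a<d. \<Sum>t<d. rho h $$ (a,t) * rho y $$ (t,a))"
      by (intro sum.cong refl) (simp add: rep_mult_entry[OF rep])
    also have "\<dots> = (\<Sum>a<d. \<Sum>t<d. if a = l \<and> t = k then rho y $$ (t,a) else 0)"
      unfolding rhoh by (intro sum.cong refl) auto
    also have "\<dots> = rho y $$ (k,l)" by (rule double_delta[OF ijkl(4) ijkl(3)])
    finally show ?thesis by simp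
  qed
  have "h = (\<Sum>b\<in>B. smul (tau (h * star b)) b)" by (rule basis_expand[OF tr sb])
  then have "rho h $$ (i,j) = rho (\<Sum>b\<in>B. smul (tau (h * star b)) b) $$ (i,j)" by simp
  also have "\<dots> = (\<Sum>b\<in>B. tau (h * star b) * rho b $$ (i,j))"
    using basis_finite[of B] sb ijkl unfolding star_symmetric_basis_def
    by (simp add: rep_sum_entry[OF rep] rep_smul_entry[OF rep])
  also have "\<dots> = inverse cc * (\<Sum>b\<in>B. rho b $$ (i,j) * rho (star b) $$ (k,l))"
    unfolding tauh sum_distrib_left by (intro sum.cong refl) (simp add: algebra_simps)
  finally have "(if i = l \<and> j = k then 1 else 0) = inverse cc * (\<Sum>b\<in>B. rho b $$ (i,j) * rho (star b) $$ (k,l))"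
    unfolding rhoh using ijkl by simp
  then have "cc * (if i = l \<and> j = k then 1 else 0) = cc * (inverse cc * (\<Sum>b\<in>B. rho b $$ (i,j) * rho (star b) $$ (k,l)))"
    by simp
  also have "\<dots> = (\<Sum>b\<in>B. rho b $$ (i,j) * rho (star b) $$ (k,l))" using cc0 by simp
  finally show ?thesis unfolding cc_def by simp
qed

end

lemma unit_mult:
  assumes val: "valuation nu" and "x \<in> val_ring nu" "x \<notin> val_ideal nu" "y \<in> val_ring nu" "y \<notin> val_ideal nu"
  shows "x * y \<notin> val_ideal nu"
proof -
  have x: "x \<noteq> 0" "nu x = 0" and y: "y \<noteq> 0" "nu y = 0" using unit_nu[OF val] assms by blast+
  have "nu (x * y) = 0" using nu_mult[OF val x(1) y(1)] x y by simp
  moreover have "x * y \<noteq> 0" using x y by simp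
  ultimately show ?thesis by (simp add: val_ideal_def)
qed

lemma cong_lemma:
  fixes nu :: "'k::field \<Rightarrow> 'g::linordered_ab_group_add"
  assumes val: "valuation nu" and Om: "Omega \<in> carrier_mat d d" and OmO: "mat_over (val_ring nu) Omega"
    and off: "\<forall>i<d. \<forall>j<d. i \<noteq> j \<longrightarrow> Omega $$ (i,j) \<in> val_ideal nu"
    and X: "X \<in> carrier_mat d d" and Y: "Y \<in> carrier_mat d d"
    and int: "Omega * X = transpose_mat Y * Omega" and st: "s < d" "t < d"
    and vX: "\<forall>i<d. \<forall>j<d. v * X $$ (i,j) \<in> val_ring nu"
    and vY: "\<forall>i<d. \<forall>j<d. v * Y $$ (i,j) \<in> val_ring nu"
  shows "Omega $$ (t,t) * (v * Y $$ (t,s)) - Omega $$ (s,s) * (v * X $$ (s,t)) \<in> val_ideal nu"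
proof -
  have OmOe: "\<And>i j. i < d \<Longrightarrow> j < d \<Longrightarrow> Omega $$ (i,j) \<in> val_ring nu"
    using OmO Om unfolding mat_over_def by auto
  have YT: "transpose_mat Y \<in> carrier_mat d d" using Y by simp
  have "(Omega * X) $$ (s,t) = (\<Sum>u<d. Omega $$ (s,u) * X $$ (u,t))" by (rule mult_entry[OF Om X st])
  moreover have "(transpose_mat Y * Omega) $$ (s,t) = (\<Sum>u<d. Y $$ (u,s) * Omega $$ (u,t))"
    unfolding mult_entry[OF YT Om st] by (intro sum.cong refl) (use Y st in auto)
  ultimately have eq: "(\<Sum>u<d. Omega $$ (s,u) * X $$ (u,t)) = (\<Sum>u<d. Y $$ (u,s) * Omega $$ (u,t))"
    using int by simp
  have L: "v * (\<Sum>u<d. Omega $$ (s,u) * X $$ (u,t)) = Omega $$ (s,s) * (v * X $$ (s,t)) +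
      (\<Sum>u\<in>{..<d} - {s}. Omega $$ (s,u) * (v * X $$ (u,t)))"
  proof -
    have "v * (\<Sum>u<d. Omega $$ (s,u) * X $$ (u,t)) = (\<Sum>u<d. Omega $$ (s,u) * (v * X $$ (u,t)))"
      unfolding sum_distrib_left by (intro sum.cong refl) (simp add: algebra_simps)
    also have "\<dots> = Omega $$ (s,s) * (v * X $$ (s,t)) + (\<Sum>u\<in>{..<d} - {s}. Omega $$ (s,u) * (v * X $$ (u,t)))"
      by (rule sum.remove) (use st in auto)
    finally show ?thesis .
  qed
  have R: "v * (\<Sum>u<d. Y $$ (u,s) * Omega $$ (u,t)) = Omega $$ (t,t) * (v * Y $$ (t,s)) +
      (\<Sum>u\<in>{..<d} - {t}. (v * Y $$ (u,s)) * Omega $$ (u,t))"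
  proof -
    have "v * (\<Sum>u<d. Y $$ (u,s) * Omega $$ (u,t)) = (\<Sum>u<d. (v * Y $$ (u,s)) * Omega $$ (u,t))"
      unfolding sum_distrib_left by (intro sum.cong refl) (simp add: algebra_simps)
    also have "\<dots> = (v * Y $$ (t,s)) * Omega $$ (t,t) + (\<Sum>u\<in>{..<d} - {t}. (v * Y $$ (u,s)) * Omega $$ (u,t))"
      by (rule sum.remove) (use st in auto)
    finally show ?thesis by (simp add: mult.commute)
  qed
  have m1: "(\<Sum>u\<in>{..<d} - {s}. Omega $$ (s,u) * (v * X $$ (u,t))) \<in> val_ideal nu"
    by (rule m_sum[OF val], simp, rule m_mult_O[OF val]) (use off vX st in auto)
  have m2: "(\<Sum>u\<in>{..<d} - {t}. (v * Y $$ (u,s)) * Omega $$ (u,t)) \<in> val_ideal nu"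
    by (rule m_sum[OF val], simp, rule O_mult_m[OF val]) (use off vY st in auto)
  have "Omega $$ (t,t) * (v * Y $$ (t,s)) - Omega $$ (s,s) * (v * X $$ (s,t))
     = (\<Sum>u\<in>{..<d} - {s}. Omega $$ (s,u) * (v * X $$ (u,t))) - (\<Sum>u\<in>{..<d} - {t}. (v * Y $$ (u,s)) * Omega $$ (u,t))"
    using L R eq by (simp add: algebra_simps)
  then show ?thesis using m_diff[OF val m1 m2] by simp
qed

context
  fixes nu :: "'k::field \<Rightarrow> 'g::linordered_ab_group_add" and rho :: "'h \<Rightarrow> 'k mat" and d :: nat
    and star :: "'h \<Rightarrow> 'h" and B :: "'h set" and c0 :: 'k
  assumes sv: "surj_valuation nu" and fr: "residue_formally_real nu"
    and finB: "finite B" and starB: "\<And>b. b \<in> B \<Longrightarrow> star b \<in> B"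
    and SR: "\<And>i j k l. i < d \<Longrightarrow> j < d \<Longrightarrow> k < d \<Longrightarrow> l < d \<Longrightarrow>
        (\<Sum>b\<in>B. rho b $$ (i,j) * rho (star b) $$ (k,l)) = c0 * (if i = l \<and> j = k then 1 else 0)"
    and c0: "c0 \<noteq> 0" and d0: "0 < d"
begin

lemma val: "valuation nu" using sv unfolding surj_valuation_def by blast

lemma exists_nonzero: "\<exists>b\<in>B. rho b $$ (0,0) \<noteq> 0"
proof (rule ccontr)
  assume "\<not> ?thesis"
  then have "(\<Sum>b\<in>B. rho b $$ (0,0) * rho (star b) $$ (0,0)) = 0" by simp
  then show False using SR[OF d0 d0 d0 d0] c0 by simp
qed

lemma minimizer:
  "\<exists>b0 s t. b0 \<in> B \<and> s < d \<and> t < d \<and> rho b0 $$ (s,t) \<noteq> 0 \<and>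
     (\<forall>b\<in>B. \<forall>i<d. \<forall>j<d. rho b $$ (i,j) \<noteq> 0 \<longrightarrow> nu (rho b0 $$ (s,t)) \<le> nu (rho b $$ (i,j)))"
proof -
  define S where "S = {(b,i,j). b \<in> B \<and> i < d \<and> j < d \<and> rho b $$ (i,j) \<noteq> 0}"
  define f where "f = (\<lambda>(b,i,j). nu (rho b $$ (i,j)))"
  have "S \<subseteq> B \<times> {..<d} \<times> {..<d}" unfolding S_def by auto
  then have fS: "finite S" using finB finite_subset by blast
  have "S \<noteq> {}" using exists_nonzero d0 unfolding S_def by blast
  define m where "m = Min (f ` S)"
  have "m \<in> f ` S" unfolding m_def using fS \<open>S \<noteq> {}\<close> by (intro Min_in) auto
  then obtain z where z1: "z \<in> S" "f z = m" by blast
  have z2: "f z \<le> f w" if "w \<in> S" for w unfolding z1(2) m_def using fS that by (intro Min_le) auto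
  note z = z1(1) z2
  obtain b0 s t where zz: "z = (b0,s,t)" by (cases z) auto
  have 1: "b0 \<in> B \<and> s < d \<and> t < d \<and> rho b0 $$ (s,t) \<noteq> 0" using z(1) zz unfolding S_def by simp
  have 2: "\<forall>b\<in>B. \<forall>i<d. \<forall>j<d. rho b $$ (i,j) \<noteq> 0 \<longrightarrow> nu (rho b0 $$ (s,t)) \<le> nu (rho b $$ (i,j))"
  proof (intro ballI allI impI)
    fix b i j assume "b \<in> B" "i < d" "j < d" "rho b $$ (i,j) \<noteq> 0"
    then have "(b,i,j) \<in> S" unfolding S_def by simp
    from z(2)[OF this] show "nu (rho b0 $$ (s,t)) \<le> nu (rho b $$ (i,j))" unfolding zz f_def by simp
  qed
  from 1 2 show ?thesis by blast
qed

lemma core: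
  assumes cases: "\<And>v s t b0. v \<noteq> 0 \<Longrightarrow> (\<forall>b\<in>B. \<forall>i<d. \<forall>j<d. v * rho b $$ (i,j) \<in> val_ring nu) \<Longrightarrow>
     b0 \<in> B \<Longrightarrow> s < d \<Longrightarrow> t < d \<Longrightarrow> v * rho b0 $$ (s,t) \<notin> val_ideal nu \<Longrightarrow> v * v * c0 \<notin> val_ideal nu"
  shows "\<exists>m0. nu c0 = m0 + m0 \<and> (\<forall>b\<in>B. \<forall>i<d. \<forall>j<d. rho b $$ (i,j) = 0 \<or> m0 \<le> nu (rho b $$ (i,j)))"
proof -
  obtain b0 s t where b0: "b0 \<in> B" "s < d" "t < d" "rho b0 $$ (s,t) \<noteq> 0"
    and mn: "\<And>b i j. b \<in> B \<Longrightarrow> i < d \<Longrightarrow> j < d \<Longrightarrow> rho b $$ (i,j) \<noteq> 0 \<Longrightarrow> nu (rho b0 $$ (s,t)) \<le> nu (rho b $$ (i,j))"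
    using minimizer by blast
  define m0 where "m0 = nu (rho b0 $$ (s,t))"
  obtain v where v: "v \<noteq> 0" "nu v = - m0" using sv unfolding surj_valuation_def by blast
  have vO: "\<forall>b\<in>B. \<forall>i<d. \<forall>j<d. v * rho b $$ (i,j) \<in> val_ring nu"
  proof (intro ballI allI impI)
    fix b i j assume bij: "b \<in> B" "i < d" "j < d"
    show "v * rho b $$ (i,j) \<in> val_ring nu"
    proof (cases "rho b $$ (i,j) = 0")
      case True then show ?thesis by (simp add: val_ring_def)
    next
      case False
      have "nu (v * rho b $$ (i,j)) = nu v + nu (rho b $$ (i,j))" using nu_mult[OF val v(1) False] .
      moreover have "m0 \<le> nu (rho b $$ (i,j))" using mn[OF bij False] m0_def by simp
      ultimately have "0 \<le> nu (v * rho b $$ (i,j))" using v(2) by simp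
      then show ?thesis by (simp add: val_ring_def)
    qed
  qed
  have unit: "v * rho b0 $$ (s,t) \<notin> val_ideal nu"
  proof -
    have "nu (v * rho b0 $$ (s,t)) = nu v + nu (rho b0 $$ (s,t))" using nu_mult[OF val v(1) b0(4)] .
    then have "nu (v * rho b0 $$ (s,t)) = 0" using v(2) m0_def by simp
    moreover have "v * rho b0 $$ (s,t) \<noteq> 0" using v(1) b0(4) by simp
    ultimately show ?thesis by (simp add: val_ideal_def)
  qed
  have notm: "v * v * c0 \<notin> val_ideal nu" by (rule cases[OF v(1) vO b0(1,2,3) unit])
  have "(\<Sum>b\<in>B. rho b $$ (s,t) * rho (star b) $$ (t,s)) = c0" using SR[OF b0(2,3,3,2)] by simp
  then have "v * v * c0 = v * v * (\<Sum>b\<in>B. rho b $$ (s,t) * rho (star b) $$ (t,s))" by simp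
  also have "\<dots> = (\<Sum>b\<in>B. (v * rho b $$ (s,t)) * (v * rho (star b) $$ (t,s)))"
    unfolding sum_distrib_left by (intro sum.cong refl) (simp add: algebra_simps)
  also have "\<dots> \<in> val_ring nu"
    by (rule O_sum[OF val finB], rule O_mult[OF val]) (use vO starB b0 in auto)
  finally have inO: "v * v * c0 \<in> val_ring nu" .
  have "v * v * c0 \<noteq> 0 \<and> nu (v * v * c0) = 0" by (rule unit_nu[OF val inO notm])
  moreover have "nu (v * v * c0) = nu v + nu v + nu c0" using v(1) c0 by (simp add: nu_mult[OF val])
  ultimately have z0: "nu v + nu v + nu c0 = 0" by simp
  have "nu c0 = (nu v + nu v + nu c0) + m0 + m0" using v(2) by (simp add: algebra_simps)
  then have ncc: "nu c0 = m0 + m0" using z0 by simp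
  have "\<forall>b\<in>B. \<forall>i<d. \<forall>j<d. rho b $$ (i,j) = 0 \<or> m0 \<le> nu (rho b $$ (i,j))"
    using mn unfolding m0_def by blast
  with ncc show ?thesis by blast
qed

lemma case_a:
  assumes Om: "Omega \<in> carrier_mat d d" and OmO: "mat_over (val_ring nu) Omega"
    and off: "\<forall>i<d. \<forall>j<d. i \<noteq> j \<longrightarrow> Omega $$ (i,j) \<in> val_ideal nu"
    and diag: "\<forall>i<d. Omega $$ (i,i) \<notin> val_ideal nu"
    and rc: "\<And>x. rho x \<in> carrier_mat d d"
    and int: "\<And>x. x \<in> B \<Longrightarrow> Omega * rho x = transpose_mat (rho (star x)) * Omega"
  shows "\<exists>m0. nu c0 = m0 + m0 \<and> (\<forall>b\<in>B. \<forall>i<d. \<forall>j<d. rho b $$ (i,j) = 0 \<or> m0 \<le> nu (rho b $$ (i,j)))"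
proof (rule core)
  fix v s t b0
  assume v: "v \<noteq> 0" and vO: "\<forall>b\<in>B. \<forall>i<d. \<forall>j<d. v * rho b $$ (i,j) \<in> val_ring nu"
    and b0: "b0 \<in> B" and st: "s < d" "t < d" and unit: "v * rho b0 $$ (s,t) \<notin> val_ideal nu"
  have OmOe: "\<And>i j. i < d \<Longrightarrow> j < d \<Longrightarrow> Omega $$ (i,j) \<in> val_ring nu"
    using OmO Om unfolding mat_over_def by auto
  define X where "X b = Omega $$ (s,s) * (v * rho b $$ (s,t))" for b
  define Y where "Y b = Omega $$ (t,t) * (v * rho (star b) $$ (t,s))" for b
  have XO: "X b \<in> val_ring nu" if "b \<in> B" for b
    unfolding X_def by (rule O_mult[OF val]) (use OmOe st vO that in auto)
  have YX: "Y b - X b \<in> val_ideal nu" if b: "b \<in> B" for b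
    unfolding X_def Y_def
    by (rule cong_lemma[OF val Om OmO off rc rc int[OF b] st]) (use vO b starB in auto)
  have X0: "X b0 \<notin> val_ideal nu" unfolding X_def
    by (rule unit_mult[OF val OmOe[OF st(1) st(1)] diag[rule_format, OF st(1)]]) (use vO b0 unit st in auto)
  have sq: "(\<Sum>b\<in>B. X b * X b) \<notin> val_ideal nu" by (rule sos[of nu B X b0, OF val fr finB XO b0 X0])
  have "(\<Sum>b\<in>B. rho b $$ (s,t) * rho (star b) $$ (t,s)) = c0" using SR[OF st(1,2,2,1)] by simp
  then have "Omega $$ (s,s) * Omega $$ (t,t) * (v * v * c0) =
     Omega $$ (s,s) * Omega $$ (t,t) * (v * v) * (\<Sum>b\<in>B. rho b $$ (s,t) * rho (star b) $$ (t,s))"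
    by (simp add: algebra_simps)
  also have "\<dots> = (\<Sum>b\<in>B. X b * Y b)"
    unfolding sum_distrib_left X_def Y_def by (intro sum.cong refl) (simp add: algebra_simps)
  also have "\<dots> = (\<Sum>b\<in>B. X b * X b) + (\<Sum>b\<in>B. X b * (Y b - X b))"
    by (simp add: sum.distrib[symmetric] algebra_simps)
  finally have eq: "Omega $$ (s,s) * Omega $$ (t,t) * (v * v * c0) = (\<Sum>b\<in>B. X b * X b) + (\<Sum>b\<in>B. X b * (Y b - X b))" .
  have mm: "(\<Sum>b\<in>B. X b * (Y b - X b)) \<in> val_ideal nu"
    by (rule m_sum[OF val finB], rule O_mult_m[OF val]) (use XO YX in auto)
  have "Omega $$ (s,s) * Omega $$ (t,t) * (v * v * c0) \<notin> val_ideal nu"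
  proof
    assume "Omega $$ (s,s) * Omega $$ (t,t) * (v * v * c0) \<in> val_ideal nu"
    then have "(\<Sum>b\<in>B. X b * X b) + (\<Sum>b\<in>B. X b * (Y b - X b)) - (\<Sum>b\<in>B. X b * (Y b - X b)) \<in> val_ideal nu"
      using eq mm m_diff[OF val] by metis
    then show False using sq by simp
  qed
  then show "v * v * c0 \<notin> val_ideal nu"
    using O_mult_m[OF val O_mult[OF val OmOe[OF st(1) st(1)] OmOe[OF st(2) st(2)]]] by blast
qed

lemma case_b:
  assumes Om: "Omega \<in> carrier_mat d d" and OmO: "mat_over (val_ring nu) Omega"
    and Om': "Omega' \<in> carrier_mat d d" and OmO': "mat_over (val_ring nu) Omega'"
    and inv: "Omega * Omega' = 1\<^sub>m d"
    and rc: "\<And>x. rho x \<in> carrier_mat d d"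
    and starstar: "\<And>x. star (star x) = x"
    and int: "\<And>x. x \<in> B \<Longrightarrow> Omega * rho x = transpose_mat (rho (star x)) * Omega"
  shows "\<exists>m0. nu c0 = m0 + m0 \<and> (\<forall>b\<in>B. \<forall>i<d. \<forall>j<d. rho b $$ (i,j) = 0 \<or> m0 \<le> nu (rho b $$ (i,j)))"
proof (rule core)
  fix v s t b0
  assume v: "v \<noteq> 0" and vO: "\<forall>b\<in>B. \<forall>i<d. \<forall>j<d. v * rho b $$ (i,j) \<in> val_ring nu"
    and b0: "b0 \<in> B" and st: "s < d" "t < d" and unit: "v * rho b0 $$ (s,t) \<notin> val_ideal nu"
  have OmOe: "\<And>i j. i < d \<Longrightarrow> j < d \<Longrightarrow> Omega $$ (i,j) \<in> val_ring nu"
    using OmO Om unfolding mat_over_def by auto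
  have OmOe': "\<And>i j. i < d \<Longrightarrow> j < d \<Longrightarrow> Omega' $$ (i,j) \<in> val_ring nu"
    using OmO' Om' unfolding mat_over_def by auto
  have tr: "transpose_mat (rho b) = Omega * rho (star b) * Omega'" if b: "b \<in> B" for b
  proof -
    have RT: "transpose_mat (rho b) \<in> carrier_mat d d" using rc[of b] by simp
    have "Omega * rho (star b) = transpose_mat (rho b) * Omega" using int[OF starB[OF b]] starstar by simp
    then have "Omega * rho (star b) * Omega' = transpose_mat (rho b) * Omega * Omega'" by simp
    also have "\<dots> = transpose_mat (rho b) * (Omega * Omega')" by (rule assoc_mult_mat[OF RT Om Om'])
    also have "\<dots> = transpose_mat (rho b)" using inv RT by simp
    finally show ?thesis by simp
  qed
  have ent: "rho b $$ (s,t) = (\<Sum>p<d. \<Sum>q<d. Omega $$ (t,p) * rho (star b) $$ (p,q) * Omega' $$ (q,s))"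
    if b: "b \<in> B" for b
  proof -
    have "rho b $$ (s,t) = transpose_mat (rho b) $$ (t,s)" using rc[of b] st by simp
    also have "\<dots> = (Omega * rho (star b) * Omega') $$ (t,s)" using tr[OF b] by simp
    also have "\<dots> = (\<Sum>p<d. \<Sum>q<d. Omega $$ (t,p) * rho (star b) $$ (p,q) * Omega' $$ (q,s))"
      by (rule triple_entry[OF Om rc Om' st(2) st(1)])
    finally show ?thesis .
  qed
  have "(\<Sum>b\<in>B. rho b $$ (s,t) * rho b $$ (s,t))
      = (\<Sum>b\<in>B. \<Sum>p<d. \<Sum>q<d. Omega $$ (t,p) * Omega' $$ (q,s) * (rho b $$ (s,t) * rho (star b) $$ (p,q)))"
  proof (rule sum.cong[OF refl])
    fix b assume b: "b \<in> B"
    show "rho b $$ (s,t) * rho b $$ (s,t) = (\<Sum>p<d. \<Sum>q<d. Omega $$ (t,p) * Omega' $$ (q,s) * (rho b $$ (s,t) * rho (star b) $$ (p,q)))"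
      apply (subst (2) ent[OF b])
      unfolding sum_distrib_left by (intro sum.cong refl) (simp add: algebra_simps)
  qed
  also have "\<dots> = (\<Sum>p<d. \<Sum>b\<in>B. \<Sum>q<d. Omega $$ (t,p) * Omega' $$ (q,s) * (rho b $$ (s,t) * rho (star b) $$ (p,q)))"
    by (rule sum.swap)
  also have "\<dots> = (\<Sum>p<d. \<Sum>q<d. \<Sum>b\<in>B. Omega $$ (t,p) * Omega' $$ (q,s) * (rho b $$ (s,t) * rho (star b) $$ (p,q)))"
    by (rule sum.cong[OF refl], rule sum.swap)
  also have "\<dots> = (\<Sum>p<d. \<Sum>q<d. Omega $$ (t,p) * Omega' $$ (q,s) * (c0 * (if s = q \<and> t = p then 1 else 0)))"
    by (intro sum.cong refl) (simp add: sum_distrib_left[symmetric] SR st)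
  also have "\<dots> = (\<Sum>p<d. \<Sum>q<d. if p = t \<and> q = s then Omega $$ (t,p) * Omega' $$ (q,s) * c0 else 0)"
    by (intro sum.cong refl) auto
  also have "\<dots> = Omega $$ (t,t) * Omega' $$ (s,s) * c0" by (rule double_delta[OF st(2) st(1)])
  finally have eq: "(\<Sum>b\<in>B. rho b $$ (s,t) * rho b $$ (s,t)) = Omega $$ (t,t) * Omega' $$ (s,s) * c0" .
  have "(\<Sum>b\<in>B. (v * rho b $$ (s,t)) * (v * rho b $$ (s,t))) \<notin> val_ideal nu"
  proof -
    have fO: "\<And>b. b \<in> B \<Longrightarrow> v * rho b $$ (s,t) \<in> val_ring nu" using vO st by auto
    show ?thesis by (rule sos[of nu B "\<lambda>b. v * rho b $$ (s,t)" b0, OF val fr finB fO b0 unit])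
  qed
  moreover have "(\<Sum>b\<in>B. (v * rho b $$ (s,t)) * (v * rho b $$ (s,t))) = Omega $$ (t,t) * Omega' $$ (s,s) * (v * v * c0)"
  proof -
    have "(\<Sum>b\<in>B. (v * rho b $$ (s,t)) * (v * rho b $$ (s,t))) = (v * v) * (\<Sum>b\<in>B. rho b $$ (s,t) * rho b $$ (s,t))"
      unfolding sum_distrib_left by (intro sum.cong refl) (simp add: algebra_simps)
    then show ?thesis unfolding eq by (simp add: algebra_simps)
  qed
  ultimately have "Omega $$ (t,t) * Omega' $$ (s,s) * (v * v * c0) \<notin> val_ideal nu" by simp
  then show "v * v * c0 \<notin> val_ideal nu"
    using O_mult_m[OF val O_mult[OF val OmOe[OF st(2) st(2)] OmOe'[OF st(1) st(1)]]] by blast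
qed

end

lemma int_entries:
  assumes Om: "Omega \<in> carrier_mat d d" and X: "X \<in> carrier_mat d d" and Y: "Y \<in> carrier_mat d d"
  shows "Omega * X = transpose_mat Y * Omega \<longleftrightarrow>
    (\<forall>s<d. \<forall>t<d. (\<Sum>u<d. Omega $$ (s,u) * X $$ (u,t)) = (\<Sum>u<d. Y $$ (u,s) * Omega $$ (u,t)))"
proof -
  have YT: "transpose_mat Y \<in> carrier_mat d d" using Y by simp
  have e1: "(Omega * X) $$ (s,t) = (\<Sum>u<d. Omega $$ (s,u) * X $$ (u,t))" if "s < d" "t < d" for s t
    by (rule mult_entry[OF Om X that])
  have e2: "(transpose_mat Y * Omega) $$ (s,t) = (\<Sum>u<d. Y $$ (u,s) * Omega $$ (u,t))" if st: "s < d" "t < d" for s t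
    unfolding mult_entry[OF YT Om st] by (intro sum.cong refl) (use Y st in auto)
  show ?thesis
  proof
    assume "Omega * X = transpose_mat Y * Omega"
    then show "\<forall>s<d. \<forall>t<d. (\<Sum>u<d. Omega $$ (s,u) * X $$ (u,t)) = (\<Sum>u<d. Y $$ (u,s) * Omega $$ (u,t))"
      using e1 e2 by metis
  next
    assume h: "\<forall>s<d. \<forall>t<d. (\<Sum>u<d. Omega $$ (s,u) * X $$ (u,t)) = (\<Sum>u<d. Y $$ (u,s) * Omega $$ (u,t))"
    show "Omega * X = transpose_mat Y * Omega"
      by (rule mat_eqI_carrier[of _ d d]) (use Om X YT h e1 e2 in auto)
  qed
qed

context wed begin

lemma int_ext:
  assumes rep: "matrix_rep smul rho d" and inv: "involutive_antiaut smul star"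
    and bas: "is_K_basis smul B" and Om: "Omega \<in> carrier_mat d d"
    and int: "\<forall>x\<in>B. Omega * rho x = transpose_mat (rho (star x)) * Omega"
  shows "Omega * rho x = transpose_mat (rho (star x)) * Omega"
proof -
  interpret v: vector_space smul by (rule vs)
  have sadd: "\<And>a b. star (a + b) = star a + star b" and ssm: "\<And>c a. star (smul c a) = smul c (star a)"
    using inv unfolding involutive_antiaut_def by blast+
  have s0: "star 0 = 0" using sadd[of 0 0] by (metis add_cancel_right_right add_0)
  have rc: "\<And>h. rho h \<in> carrier_mat d d" using rep_carrier[OF rep] .
  define Pr where "Pr x = (\<forall>s<d. \<forall>t<d. (\<Sum>u<d. Omega $$ (s,u) * rho x $$ (u,t)) = (\<Sum>u<d. rho (star x) $$ (u,s) * Omega $$ (u,t)))" for x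
  have "x \<in> v.span B" using bas unfolding is_K_basis_def by blast
  then have "Pr x"
  proof (induction rule: v.span_induct_alt)
    case base
    then show ?case unfolding Pr_def s0 by (simp add: rep_zero_entry[OF rep])
  next
    case (step c b y)
    have Pb: "Pr b" unfolding Pr_def using int step(1) int_entries[OF Om rc rc] by blast
    show ?case unfolding Pr_def
    proof (intro allI impI)
      fix s t assume st: "s < d" "t < d"
      have "(\<Sum>u<d. Omega $$ (s,u) * rho (smul c b + y) $$ (u,t))
         = c * (\<Sum>u<d. Omega $$ (s,u) * rho b $$ (u,t)) + (\<Sum>u<d. Omega $$ (s,u) * rho y $$ (u,t))"
        using st by (simp add: rep_add_entry[OF rep] rep_smul_entry[OF rep] sum_distrib_left sum.distrib algebra_simps)
      also have "\<dots> = c * (\<Sum>u<d. rho (star b) $$ (u,s) * Omega $$ (u,t)) + (\<Sum>u<d. rho (star y) $$ (u,s) * Omega $$ (u,t))"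
        using Pb step(2) st unfolding Pr_def by simp
      also have "\<dots> = (\<Sum>u<d. rho (star (smul c b + y)) $$ (u,s) * Omega $$ (u,t))"
        using st by (simp add: sadd ssm rep_add_entry[OF rep] rep_smul_entry[OF rep] sum_distrib_left sum.distrib algebra_simps)
      finally show "(\<Sum>u<d. Omega $$ (s,u) * rho (smul c b + y) $$ (u,t)) = (\<Sum>u<d. rho (star (smul c b + y)) $$ (u,s) * Omega $$ (u,t))" .
    qed
  qed
  then show ?thesis using int_entries[OF Om rc rc] unfolding Pr_def by blast
qed

end


theorem mainTheorem4:
  fixes nu :: "'k::field \<Rightarrow> 'g::linordered_ab_group_add"
    and smul :: "'k \<Rightarrow> 'h::ring_1 \<Rightarrow> 'h"
    and tau :: "'h \<Rightarrow> 'k" and star :: "'h \<Rightarrow> 'h"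
    and c :: "('h \<Rightarrow> 'k) \<Rightarrow> 'k"
    and B :: "'h set" and rho :: "'h \<Rightarrow> 'k mat" and d :: nat
  assumes "surj_valuation nu"
    and "residue_formally_real nu"
    and "split_semisimple smul"
    and "symmetrizing_trace smul tau"
    and "involutive_antiaut smul star"
    and "schur_elements smul tau c"
    and "star_symmetric_basis smul tau star B"
    and "irreducible_rep smul rho d"
  shows
    "(\<forall>Omega. Omega \<in> carrier_mat d d \<and> mat_over (val_ring nu) Omega \<and>
        (\<forall>x\<in>B. Omega * rho x = transpose_mat (rho (star x)) * Omega) \<and>
        (\<forall>i<d. \<forall>j<d. i \<noteq> j \<longrightarrow> Omega $$ (i,j) \<in> val_ideal nu) \<and>
        (\<forall>i<d. Omega $$ (i,i) \<notin> val_ideal nu)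
      \<longrightarrow> (\<exists>a. nu (c (character rho)) = - (a + a) \<and>
             balanced nu smul tau star (c (character rho)) rho \<and>
             (\<forall>v. v \<noteq> 0 \<and> nu v = a \<longrightarrow>
                (\<forall>x\<in>B. \<forall>s<d. \<forall>t<d.
                   v * rho x $$ (s,t) \<in> val_ring nu \<and>
                   Omega $$ (t,t) * (v * rho (star x) $$ (t,s))
                     - Omega $$ (s,s) * (v * rho x $$ (s,t)) \<in> val_ideal nu))))
     \<and>
     (\<forall>Omega. Omega \<in> carrier_mat d d \<and> mat_over (val_ring nu) Omega \<and>
        transpose_mat Omega = Omega \<and>
        (\<exists>Omega'. Omega' \<in> carrier_mat d d \<and> mat_over (val_ring nu) Omega' \<and>
            Omega * Omega' = 1\<^sub>m d \<and> Omega' * Omega = 1\<^sub>m d) \<and>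
        (\<forall>x\<in>B. Omega * rho x = transpose_mat (rho (star x)) * Omega)
      \<longrightarrow> (\<exists>a. nu (c (character rho)) = - (a + a)) \<and>
          balanced nu smul tau star (c (character rho)) rho)"
proof -
  note sv = assms(1) and fr = assms(2) and ss = assms(3) and tr = assms(4) and inv = assms(5)
    and sc = assms(6) and sb = assms(7) and irrho = assms(8)
  have val: "valuation nu" using sv unfolding surj_valuation_def by blast
  have alg: "K_algebra smul" using ss unfolding split_semisimple_def by (rule conjunct1)
  have "\<exists>rs :: (('h \<Rightarrow> 'k mat) \<times> nat) list.
        (\<forall>(r, n) \<in> set rs. irreducible_rep smul r n) \<and>
        bij_betw (\<lambda>h. map (\<lambda>(r, n). r h) rs) UNIV
          {Ms. length Ms = length rs \<and>
               (\<forall>i < length rs. Ms ! i \<in> carrier_mat (snd (rs ! i)) (snd (rs ! i)))}"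
    using ss unfolding split_semisimple_def by (rule conjunct2)
  then obtain rs :: "(('h \<Rightarrow> 'k mat) \<times> nat) list" where
    rs1: "\<forall>(r, n) \<in> set rs. irreducible_rep smul r n" and
    rs2: "bij_betw (\<lambda>h. map (\<lambda>(r, n). r h) rs) UNIV
          {Ms. length Ms = length rs \<and>
               (\<forall>i < length rs. Ms ! i \<in> carrier_mat (snd (rs ! i)) (snd (rs ! i)))}"
    by (elim exE conjE)
  have w: "wed smul rs" by (rule wed.intro[OF alg rs1 rs2])
  interpret wed smul rs by (rule w)
  have rep: "matrix_rep smul rho d" using irrho unfolding irreducible_rep_def by (rule conjunct1)
  have d0: "0 < d" using irrho unfolding irreducible_rep_def by (elim conjE)
  have rc: "\<And>h. rho h \<in> carrier_mat d d" using rep_carrier[OF rep] .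
  have starstar: "\<And>x. star (star x) = x" using inv unfolding involutive_antiaut_def by blast
  define c0 where "c0 = c (character rho)"
  have inirr: "character rho \<in> irr_chars smul" unfolding irr_chars_def using irrho by blast
  have c0nz: "c0 \<noteq> 0" unfolding c0_def using sc inirr unfolding schur_elements_def by blast
  have basis_facts: "finite B' \<and> (\<forall>b. b \<in> B' \<longrightarrow> star b \<in> B') \<and> is_K_basis smul B'"
    if sb': "star_symmetric_basis smul tau star B'" for B'
  proof -
    have bas: "is_K_basis smul B'" using sb' unfolding star_symmetric_basis_def by blast
    have "star ` B' = B'" using sb' unfolding star_symmetric_basis_def by blast
    then show ?thesis using basis_finite[OF bas] bas by blast
  qed
  have SR: "\<And>i j k l. i < d \<Longrightarrow> j < d \<Longrightarrow> k < d \<Longrightarrow> l < d \<Longrightarrow>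
        (\<Sum>b\<in>B'. rho b $$ (i,j) * rho (star b) $$ (k,l)) = c0 * (if i = l \<and> j = k then 1 else 0)"
    if sb': "star_symmetric_basis smul tau star B'" for B'
    unfolding c0_def by (rule schur_rel[OF tr sc sb' irrho])
  have A: "\<exists>m0. nu c0 = m0 + m0 \<and> (\<forall>b\<in>B'. \<forall>i<d. \<forall>j<d. rho b $$ (i,j) = 0 \<or> m0 \<le> nu (rho b $$ (i,j)))"
    if sb': "star_symmetric_basis smul tau star B'"
      and Om: "Omega \<in> carrier_mat d d" and OmO: "mat_over (val_ring nu) Omega"
      and intB: "\<forall>x\<in>B. Omega * rho x = transpose_mat (rho (star x)) * Omega"
      and off: "\<forall>i<d. \<forall>j<d. i \<noteq> j \<longrightarrow> Omega $$ (i,j) \<in> val_ideal nu"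
      and diag: "\<forall>i<d. Omega $$ (i,i) \<notin> val_ideal nu"
    for B' Omega
  proof -
    have bf: "finite B'" "\<And>b. b \<in> B' \<Longrightarrow> star b \<in> B'" using basis_facts[OF sb'] by blast+
    have basB: "is_K_basis smul B" using sb unfolding star_symmetric_basis_def by blast
    have int': "\<And>x. x \<in> B' \<Longrightarrow> Omega * rho x = transpose_mat (rho (star x)) * Omega"
      using int_ext[OF rep inv basB Om intB] by blast
    show ?thesis
      by (rule case_a[of nu B' star d rho c0 Omega, OF sv fr bf(1) bf(2) SR[OF sb'] c0nz d0 Om OmO off diag rc int'])
  qed
  have Bb: "\<exists>m0. nu c0 = m0 + m0 \<and> (\<forall>b\<in>B'. \<forall>i<d. \<forall>j<d. rho b $$ (i,j) = 0 \<or> m0 \<le> nu (rho b $$ (i,j)))"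
    if sb': "star_symmetric_basis smul tau star B'"
      and Om: "Omega \<in> carrier_mat d d" and OmO: "mat_over (val_ring nu) Omega"
      and Om': "Omega' \<in> carrier_mat d d" and OmO': "mat_over (val_ring nu) Omega'"
      and inv': "Omega * Omega' = 1\<^sub>m d"
      and intB: "\<forall>x\<in>B. Omega * rho x = transpose_mat (rho (star x)) * Omega"
    for B' Omega Omega'
  proof -
    have bf: "finite B'" "\<And>b. b \<in> B' \<Longrightarrow> star b \<in> B'" using basis_facts[OF sb'] by blast+
    have basB: "is_K_basis smul B" using sb unfolding star_symmetric_basis_def by blast
    have int': "\<And>x. x \<in> B' \<Longrightarrow> Omega * rho x = transpose_mat (rho (star x)) * Omega"
      using int_ext[OF rep inv basB Om intB] by blast
    show ?thesis
      by (rule case_b[of nu B' star d rho c0 Omega Omega', OF sv fr bf(1) bf(2) SR[OF sb'] c0nz d0 Om OmO Om' OmO' inv' rc starstar int'])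
  qed
  have bal: "balanced nu smul tau star c0 rho"
    if H: "\<And>B'. star_symmetric_basis smul tau star B' \<Longrightarrow>
        \<exists>m0. nu c0 = m0 + m0 \<and> (\<forall>b\<in>B'. \<forall>i<d. \<forall>j<d. rho b $$ (i,j) = 0 \<or> m0 \<le> nu (rho b $$ (i,j)))"
      and m: "nu c0 = m + m"
    for m
    unfolding balanced_def
  proof (intro exI[of _ "- m"] conjI allI impI ballI)
    show "nu c0 = - (- m + - m)" using m by simp
    fix B' b assume sb': "star_symmetric_basis smul tau star B'" and b: "b \<in> B'"
    obtain m' where m': "nu c0 = m' + m'"
      and bd: "\<forall>b\<in>B'. \<forall>i<d. \<forall>j<d. rho b $$ (i,j) = 0 \<or> m' \<le> nu (rho b $$ (i,j))"
      using H[OF sb'] by blast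
    have "m' = m" by (rule double_cancel[OF val]) (use m m' in simp)
    then show "mat_val_ge nu (rho b) (- (- m))"
      unfolding mat_val_ge_def using bd b rep_dims[OF rep] by simp
  qed
  show ?thesis
  proof (rule conjI; intro allI impI)
    fix Omega
    assume H: "Omega \<in> carrier_mat d d \<and> mat_over (val_ring nu) Omega \<and>
        (\<forall>x\<in>B. Omega * rho x = transpose_mat (rho (star x)) * Omega) \<and>
        (\<forall>i<d. \<forall>j<d. i \<noteq> j \<longrightarrow> Omega $$ (i,j) \<in> val_ideal nu) \<and>
        (\<forall>i<d. Omega $$ (i,i) \<notin> val_ideal nu)"
    then have Om: "Omega \<in> carrier_mat d d" and OmO: "mat_over (val_ring nu) Omega"
      and intB: "\<forall>x\<in>B. Omega * rho x = transpose_mat (rho (star x)) * Omega"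
      and off: "\<forall>i<d. \<forall>j<d. i \<noteq> j \<longrightarrow> Omega $$ (i,j) \<in> val_ideal nu"
      and diag: "\<forall>i<d. Omega $$ (i,i) \<notin> val_ideal nu" by blast+
    obtain m where m: "nu c0 = m + m"
      and bd: "\<forall>b\<in>B. \<forall>i<d. \<forall>j<d. rho b $$ (i,j) = 0 \<or> m \<le> nu (rho b $$ (i,j))"
      using A[OF sb Om OmO intB off diag] by blast
    have balc: "balanced nu smul tau star c0 rho"
      by (rule bal[OF _ m]) (rule A[OF _ Om OmO intB off diag])
    have vpart: "\<forall>v. v \<noteq> 0 \<and> nu v = - m \<longrightarrow>
                (\<forall>x\<in>B. \<forall>s<d. \<forall>t<d.
                   v * rho x $$ (s,t) \<in> val_ring nu \<and>
                   Omega $$ (t,t) * (v * rho (star x) $$ (t,s))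
                     - Omega $$ (s,s) * (v * rho x $$ (s,t)) \<in> val_ideal nu)"
    proof (intro allI impI ballI conjI)
      fix v x s t assume v: "v \<noteq> 0 \<and> nu v = - m" and x: "x \<in> B" and st: "s < d" "t < d"
      have bf: "\<And>b. b \<in> B \<Longrightarrow> star b \<in> B" using basis_facts[OF sb] by blast
      have vO: "v * rho b $$ (i,j) \<in> val_ring nu" if b: "b \<in> B" and ij: "i < d" "j < d" for b i j
      proof (cases "rho b $$ (i,j) = 0")
        case True then show ?thesis by (simp add: val_ring_def)
      next
        case False
        have "nu (v * rho b $$ (i,j)) = nu v + nu (rho b $$ (i,j))" using nu_mult[OF val _ False] v by blast
        moreover have "m \<le> nu (rho b $$ (i,j))" using bd b ij False by blast
        ultimately have "0 \<le> nu (v * rho b $$ (i,j))" using v by simp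
        then show ?thesis by (simp add: val_ring_def)
      qed
      show "v * rho x $$ (s,t) \<in> val_ring nu" by (rule vO[OF x st])
      show "Omega $$ (t,t) * (v * rho (star x) $$ (t,s)) - Omega $$ (s,s) * (v * rho x $$ (s,t)) \<in> val_ideal nu"
        by (rule cong_lemma[OF val Om OmO off rc rc intB[rule_format, OF x] st])
           (use vO x bf in auto)
    qed
    show "\<exists>a. nu (c (character rho)) = - (a + a) \<and>
             balanced nu smul tau star (c (character rho)) rho \<and>
             (\<forall>v. v \<noteq> 0 \<and> nu v = a \<longrightarrow>
                (\<forall>x\<in>B. \<forall>s<d. \<forall>t<d.
                   v * rho x $$ (s,t) \<in> val_ring nu \<and>
                   Omega $$ (t,t) * (v * rho (star x) $$ (t,s))
                     - Omega $$ (s,s) * (v * rho x $$ (s,t)) \<in> val_ideal nu))"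
      by (rule exI[of _ "- m"]) (use m balc vpart c0_def in simp)
  next
    fix Omega
    assume H: "Omega \<in> carrier_mat d d \<and> mat_over (val_ring nu) Omega \<and>
        transpose_mat Omega = Omega \<and>
        (\<exists>Omega'. Omega' \<in> carrier_mat d d \<and> mat_over (val_ring nu) Omega' \<and>
            Omega * Omega' = 1\<^sub>m d \<and> Omega' * Omega = 1\<^sub>m d) \<and>
        (\<forall>x\<in>B. Omega * rho x = transpose_mat (rho (star x)) * Omega)"
    then obtain Omega' where Om: "Omega \<in> carrier_mat d d" and OmO: "mat_over (val_ring nu) Omega"
      and Om': "Omega' \<in> carrier_mat d d" and OmO': "mat_over (val_ring nu) Omega'"
      and inv': "Omega * Omega' = 1\<^sub>m d"
      and intB: "\<forall>x\<in>B. Omega * rho x = transpose_mat (rho (star x)) * Omega" by blast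
    obtain m where m: "nu c0 = m + m" using Bb[OF sb Om OmO Om' OmO' inv' intB] by blast
    have "balanced nu smul tau star c0 rho"
      by (rule bal[OF _ m]) (rule Bb[OF _ Om OmO Om' OmO' inv' intB])
    moreover have "\<exists>a. nu c0 = - (a + a)" by (rule exI[of _ "- m"]) (use m in simp)
    ultimately show "(\<exists>a. nu (c (character rho)) = - (a + a)) \<and>
          balanced nu smul tau star (c (character rho)) rho" unfolding c0_def by blast
  qed
qed


end
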